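(* Assume (A1)–(A4). Let $\mathbf v\in C^1([0,T]\times\overline\Omega)^d$ with $\mathrm{div}_x\mathbf v=0$ in $Q$ and $\mathbf v\cdot\mathbf n=0$ on $(0,T)\times\partial\Omega$, and let $(\psi,\phi)$ be a nonnegative classical solution of the polymer–monomer system with velocity $\mathbf v$ and initial data $(\psi_0,\phi_0)$, $\phi_0\in L^\infty(\Omega)$. Then $$\operatorname{ess\,sup}_{t\in(0,T)}\|\phi(t)\|_{L^\infty(\Omega)}\le\max(K^2,\|\phi_0\|_{L^\infty(\Omega)}).$$
   Context: Fix $d\in\{2,3\}$, $T>0$, a bounded domain $\Omega\subset\mathbb{R}^d$ with $\mathcal C^{1,1}$ boundary and unit outward normal $\mathbf n$, $Q:=(0,T)\times\Omega$, $r_0>0$, constants $K>0$, $A_0>0$. $\mathbf D_x\mathbf v:=\frac12(\nabla_x\mathbf v+(\nabla_x\mathbf v)^T)$; $\beta(r,\mathbf v,\mathbf D_x\mathbf v)$ means $\beta(r,\mathbf v(t,x),\mathbf D_x\mathbf v(t,x))$. A classical solution of the polymer–monomer system with velocity $\mathbf v$ and initial data $(\psi_0,\phi_0)$ is a pair $\psi:[0,T]\times\overline\Omega\times[r_0,\infty)\to\mathbb{R}$, $\phi:[0,T]\times\overline\Omega\to\mathbb{R}$ such that: $\psi,\partial_t\psi,\partial_r\psi,\nabla_x\psi,\nabla_x^2\psi$ and $\phi,\partial_t\phi,\nabla_x\phi,\nabla_x^2\phi$ are continuous on the closed domains; for every $m\ge0$, $(1+r)^m(|\psi|+|\partial_t\psi|+|\partial_r\psi|+|\nabla_x\psi|+|\nabla_x^2\psi|)$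 is bounded; $\nabla_x\psi\cdot\mathbf n=0$ and $\nabla_x\phi\cdot\mathbf n=0$ on $\partial\Omega$; $\psi(0)=\psi_0$, $\phi(0)=\phi_0$; and $$\partial_t\psi+\mathbf v\cdot\nabla_x\psi+\tau(r)\phi\,\partial_r\psi-A(r)\Delta_x\psi=-\beta(r,\mathbf v,\mathbf D_x\mathbf v)\psi+2\int_r^\infty\beta(\tilde r,\mathbf v,\mathbf D_x\mathbf v)\kappa(r,\tilde r)\psi(t,x,\tilde r)\,d\tilde r,$$ $$\partial_t\phi+\mathbf v\cdot\nabla_x\phi-A_0\Delta_x\phi=-\phi\int_{r_0}^\infty\partial_r(r\tau(r))\psi\,dr+2\int_0^{r_0}r\int_{r_0}^\infty\beta(\tilde r,\mathbf v,\mathbf D_x\mathbf v)\kappa(r,\tilde r)\psi(t,x,\tilde r)\,d\tilde r\,dr.$$ Nonnegative means $\psi\ge0$, $\phi\ge0$. (A1) $A:(r_0,\infty)\to(0,\infty)$ continuous, nonincreasing, $\lim_{r\to\infty}A(r)=0$. (A2) $\tau:[r_0,\infty)\to[0,\infty)$ nondecreasing, bounded, globally Lipschitz, $\tau(r_0)=0$, $\tau'(r_0)>0$, $K^{-1}r_0\le\tau(r)+r\tau'(r)$ and $\tau(r)+\tau'(r)+r\tau'(r)+\tau(r)/r\le K$. (A3) $\beta:(r_0,\infty)\times\mathbb{R}^d\times\mathbb{R}^{d\times d}\to\mathbb{R}$ smooth, increasing in $r$, $0<\beta\le K$; $\eta(r):=\sup_{\mathbf u,\mathbf D}\partial_r\beta/\beta$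 is measurable, nonnegative, $(1+r)\eta(r)\le K$, $\int_{r_0}^\infty\eta\le K$. (A4) $\kappa(r,\tilde r)=1/\tilde r$ if $\tilde r>r_0$ and $0<r<\tilde r$; $\kappa=0$ otherwise. *)

theory Defs
  imports "HOL-Analysis.Analysis" "HOL-Probability.Essential_Supremum"
begin

fun iter_dd :: "'a::real_normed_vector list \<Rightarrow> ('a \<Rightarrow> real) \<Rightarrow> 'a \<Rightarrow> real" where
  "iter_dd [] f = f"
| "iter_dd (h # hs) f = (\<lambda>x. frechet_derivative (iter_dd hs f) (at x) h)"

definition smooth_on :: "'a::real_normed_vector set \<Rightarrow> ('a \<Rightarrow> real) \<Rightarrow> bool" where
  "smooth_on S f \<longleftrightarrow> open S \<and>
     (\<forall>hs. continuous_on S (iter_dd hs f) \<and> (\<forall>x\<in>S. iter_dd hs f differentiable (at x)))"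

text \<open>Locally near every boundary point x0, Omega is the sublevel set {rho < 0} of a
  C^{1,1} defining function rho (differentiable, with Lipschitz gradient) whose gradient
  does not vanish; the unit outward normal at x0 is grad rho(x0) / |grad rho(x0)|.\<close>
definition C11_boundary_with_normal ::
    "(real^'n) set \<Rightarrow> (real^'n \<Rightarrow> real^'n) \<Rightarrow> bool" where
  "C11_boundary_with_normal \<Omega> nrm \<longleftrightarrow>
     (\<forall>x0\<in>frontier \<Omega>. \<exists>\<delta>>0. \<exists>(\<rho>::real^'n \<Rightarrow> real) (g::real^'n \<Rightarrow> real^'n) L.
        (\<forall>x\<in>ball x0 \<delta>. (\<rho> has_derivative (\<lambda>h. g x \<bullet> h)) (at x)) \<and>
        (\<forall>x\<in>ball x0 \<delta>. \<forall>y\<in>ball x0 \<delta>. norm (g x - g y) \<le> L * norm (x - y)) \<and>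
        (\<forall>x\<in>ball x0 \<delta>. g x \<noteq> 0) \<and>
        \<Omega> \<inter> ball x0 \<delta> = {x \<in> ball x0 \<delta>. \<rho> x < 0} \<and>
        nrm x0 = g x0 /\<^sub>R norm (g x0))"

definition bounded_C11_domain :: "(real^'n) set \<Rightarrow> (real^'n \<Rightarrow> real^'n) \<Rightarrow> bool" where
  "bounded_C11_domain \<Omega> nrm \<longleftrightarrow> open \<Omega> \<and> connected \<Omega> \<and> \<Omega> \<noteq> {} \<and> bounded \<Omega> \<and>
     C11_boundary_with_normal \<Omega> nrm"

definition symgrad :: "(real \<Rightarrow> real^'n \<Rightarrow> real^'n) \<Rightarrow> real \<Rightarrow> real^'n \<Rightarrow> real^'n^'n" where
  "symgrad v t x = (\<chi> i j. (jacobian (v t) (at x) $ i $ j + jacobian (v t) (at x) $ j $ i) / 2)"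

definition div_x :: "(real \<Rightarrow> real^'n \<Rightarrow> real^'n) \<Rightarrow> real \<Rightarrow> real^'n \<Rightarrow> real" where
  "div_x v t x = (\<Sum>i\<in>UNIV. jacobian (v t) (at x) $ i $ i)"

text \<open>v in C^1([0,T] x closure Omega)^d: continuous on the closed cylinder, with
  partial derivatives in the open cylinder that extend continuously to the closed one.\<close>
definition C1_closed_cyl :: "real \<Rightarrow> (real^'n) set \<Rightarrow> (real \<Rightarrow> real^'n \<Rightarrow> real^'n) \<Rightarrow> bool" where
  "C1_closed_cyl T \<Omega> v \<longleftrightarrow>
     (\<exists>(vt::real \<Rightarrow> real^'n \<Rightarrow> real^'n) (vx::real \<Rightarrow> real^'n \<Rightarrow> real^'n^'n).
        continuous_on ({0..T} \<times> closure \<Omega>) (\<lambda>(t,x). v t x) \<and>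
        continuous_on ({0..T} \<times> closure \<Omega>) (\<lambda>(t,x). vt t x) \<and>
        continuous_on ({0..T} \<times> closure \<Omega>) (\<lambda>(t,x). vx t x) \<and>
        (\<forall>t\<in>{0<..<T}. \<forall>x\<in>\<Omega>.
           ((\<lambda>s. v s x) has_vector_derivative vt t x) (at t) \<and>
           (v t has_derivative (\<lambda>h. vx t x *v h)) (at x)))"

definition Linf_norm :: "(real^'n) set \<Rightarrow> (real^'n \<Rightarrow> real) \<Rightarrow> ereal" where
  "Linf_norm \<Omega> f = esssup (restrict_space lborel \<Omega>) (\<lambda>x. ereal \<bar>f x\<bar>)"

definition in_Linf :: "(real^'n) set \<Rightarrow> (real^'n \<Rightarrow> real) \<Rightarrow> bool" where
  "in_Linf \<Omega> f \<longleftrightarrow> f \<in> borel_measurable (restrict_space lborel \<Omega>) \<and> Linf_norm \<Omega> f < \<infinity>"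

definition eta :: "(real \<Rightarrow> real^'n \<Rightarrow> real^'n^'n \<Rightarrow> real) \<Rightarrow> real \<Rightarrow> real" where
  "eta \<beta> r = Sup {deriv (\<lambda>s. \<beta> s u D) r / \<beta> r u D | u D. True}"

definition classical_solution ::
  "(real^'n) set \<Rightarrow> (real^'n \<Rightarrow> real^'n) \<Rightarrow> real \<Rightarrow> real \<Rightarrow> real
   \<Rightarrow> (real \<Rightarrow> real) \<Rightarrow> (real \<Rightarrow> real) \<Rightarrow> (real \<Rightarrow> real^'n \<Rightarrow> real^'n^'n \<Rightarrow> real)
   \<Rightarrow> (real \<Rightarrow> real \<Rightarrow> real)
   \<Rightarrow> (real \<Rightarrow> real^'n \<Rightarrow> real^'n)
   \<Rightarrow> (real^'n \<Rightarrow> real \<Rightarrow> real) \<Rightarrow> (real^'n \<Rightarrow> real)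
   \<Rightarrow> (real \<Rightarrow> real^'n \<Rightarrow> real \<Rightarrow> real) \<Rightarrow> (real \<Rightarrow> real^'n \<Rightarrow> real) \<Rightarrow> bool" where
  "classical_solution \<Omega> nrm T r0 A0 A \<tau> \<beta> \<kappa> v \<psi>0 \<phi>0 \<psi> \<phi> \<longleftrightarrow>
   (\<exists>(\<psi>t::real \<Rightarrow> real^'n \<Rightarrow> real \<Rightarrow> real) (\<psi>r::real \<Rightarrow> real^'n \<Rightarrow> real \<Rightarrow> real)
      (\<psi>x::real \<Rightarrow> real^'n \<Rightarrow> real \<Rightarrow> real^'n) (\<psi>xx::real \<Rightarrow> real^'n \<Rightarrow> real \<Rightarrow> real^'n^'n)
      (\<phi>t::real \<Rightarrow> real^'n \<Rightarrow> real) (\<phi>x::real \<Rightarrow> real^'n \<Rightarrow> real^'n)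
      (\<phi>xx::real \<Rightarrow> real^'n \<Rightarrow> real^'n^'n).
     \<comment> \<open>continuity on the closed domains\<close>
     continuous_on ({0..T} \<times> closure \<Omega> \<times> {r0..}) (\<lambda>(t,x,r). \<psi> t x r) \<and>
     continuous_on ({0..T} \<times> closure \<Omega> \<times> {r0..}) (\<lambda>(t,x,r). \<psi>t t x r) \<and>
     continuous_on ({0..T} \<times> closure \<Omega> \<times> {r0..}) (\<lambda>(t,x,r). \<psi>r t x r) \<and>
     continuous_on ({0..T} \<times> closure \<Omega> \<times> {r0..}) (\<lambda>(t,x,r). \<psi>x t x r) \<and>
     continuous_on ({0..T} \<times> closure \<Omega> \<times> {r0..}) (\<lambda>(t,x,r). \<psi>xx t x r) \<and>
     continuous_on ({0..T} \<times> closure \<Omega>) (\<lambda>(t,x). \<phi> t x) \<and>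
     continuous_on ({0..T} \<times> closure \<Omega>) (\<lambda>(t,x). \<phi>t t x) \<and>
     continuous_on ({0..T} \<times> closure \<Omega>) (\<lambda>(t,x). \<phi>x t x) \<and>
     continuous_on ({0..T} \<times> closure \<Omega>) (\<lambda>(t,x). \<phi>xx t x) \<and>
     \<comment> \<open>these are the partial derivatives (in the interior, extended continuously)\<close>
     (\<forall>t\<in>{0<..<T}. \<forall>x\<in>\<Omega>. \<forall>r\<in>{r0<..}.
        ((\<lambda>s. \<psi> s x r) has_real_derivative \<psi>t t x r) (at t) \<and>
        ((\<lambda>s. \<psi> t x s) has_real_derivative \<psi>r t x r) (at r) \<and>
        ((\<lambda>y. \<psi> t y r) has_derivative (\<lambda>h. \<psi>x t x r \<bullet> h)) (at x) \<and>
        ((\<lambda>y. \<psi>x t y r) has_derivative (\<lambda>h. \<psi>xx t x r *v h)) (at x)) \<and>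
     (\<forall>t\<in>{0<..<T}. \<forall>x\<in>\<Omega>.
        ((\<lambda>s. \<phi> s x) has_real_derivative \<phi>t t x) (at t) \<and>
        ((\<lambda>y. \<phi> t y) has_derivative (\<lambda>h. \<phi>x t x \<bullet> h)) (at x) \<and>
        ((\<lambda>y. \<phi>x t y) has_derivative (\<lambda>h. \<phi>xx t x *v h)) (at x)) \<and>
     \<comment> \<open>polynomial decay in r of all orders\<close>
     (\<forall>m::real. m \<ge> 0 \<longrightarrow> (\<exists>C. \<forall>t\<in>{0..T}. \<forall>x\<in>closure \<Omega>. \<forall>r\<in>{r0..}.
        (1 + r) powr m * (\<bar>\<psi> t x r\<bar> + \<bar>\<psi>t t x r\<bar> + \<bar>\<psi>r t x r\<bar> + norm (\<psi>x t x r)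
                          + norm (\<psi>xx t x r)) \<le> C)) \<and>
     \<comment> \<open>homogeneous Neumann boundary conditions\<close>
     (\<forall>t\<in>{0..T}. \<forall>x\<in>frontier \<Omega>. \<forall>r\<in>{r0..}. \<psi>x t x r \<bullet> nrm x = 0) \<and>
     (\<forall>t\<in>{0..T}. \<forall>x\<in>frontier \<Omega>. \<phi>x t x \<bullet> nrm x = 0) \<and>
     \<comment> \<open>initial data\<close>
     (\<forall>x\<in>closure \<Omega>. \<forall>r\<in>{r0..}. \<psi> 0 x r = \<psi>0 x r) \<and>
     (\<forall>x\<in>closure \<Omega>. \<phi> 0 x = \<phi>0 x) \<and>
     \<comment> \<open>the polymer equation\<close>
     (\<forall>t\<in>{0<..<T}. \<forall>x\<in>\<Omega>. \<forall>r\<in>{r0<..}.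
        \<psi>t t x r + v t x \<bullet> \<psi>x t x r + \<tau> r * \<phi> t x * \<psi>r t x r
          - A r * (\<Sum>i\<in>UNIV. \<psi>xx t x r $ i $ i)
        = - \<beta> r (v t x) (symgrad v t x) * \<psi> t x r
          + 2 * (LINT rt:{r..}|lborel. \<beta> rt (v t x) (symgrad v t x) * \<kappa> r rt * \<psi> t x rt)) \<and>
     \<comment> \<open>the monomer equation; d/dr (r tau(r)) = tau(r) + r tau'(r)\<close>
     (\<forall>t\<in>{0<..<T}. \<forall>x\<in>\<Omega>.
        \<phi>t t x + v t x \<bullet> \<phi>x t x - A0 * (\<Sum>i\<in>UNIV. \<phi>xx t x $ i $ i)
        = - \<phi> t x * (LINT r:{r0..}|lborel. (\<tau> r + r * deriv \<tau> r) * \<psi> t x r)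
          + 2 * (LINT r:{0..r0}|lborel. r *
                   (LINT rt:{r0..}|lborel. \<beta> rt (v t x) (symgrad v t x) * \<kappa> r rt * \<psi> t x rt))))"

end

theory Submission
  imports Defs
begin

lemma abs_tri2: "\<bar>x - D\<bar> < c \<Longrightarrow> \<bar>y - D\<bar> < c \<Longrightarrow> c + c = e \<Longrightarrow> \<bar>x - y\<bar> \<le> (e::real)"
  by linarith

lemma diff_imp_Cd:
  fixes g :: "real \<Rightarrow> real"
  assumes "DERIV g r :> D"
  shows "\<forall>k::nat. \<exists>m::nat. \<forall>a::rat. \<forall>b::rat. a \<noteq> 0 \<longrightarrow> b \<noteq> 0 \<longrightarrow>
      \<bar>of_rat a\<bar> < 1 / real (Suc m) \<longrightarrow> \<bar>of_rat b\<bar> < 1 / real (Suc m) \<longrightarrow>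
      \<bar>(g (r + of_rat a) - g r) / of_rat a - (g (r + of_rat b) - g r) / of_rat b\<bar> \<le> 1 / real (Suc k)"
proof
  fix k :: nat
  have L: "(\<lambda>h. (g (r + h) - g r) / h) \<midarrow>0\<rightarrow> D" using assms by (simp add: DERIV_def)
  have e: "1 / (2 * real (Suc k)) > 0" by simp
  obtain s where s: "s > 0" "\<And>h. h \<noteq> 0 \<Longrightarrow> \<bar>h\<bar> < s \<Longrightarrow> \<bar>(g (r + h) - g r) / h - D\<bar> < 1 / (2 * real (Suc k))"
    using L[unfolded LIM_eq, rule_format, OF e] by auto
  obtain m where m: "inverse (real (Suc m)) < s" using reals_Archimedean[OF s(1)] by blast
  show "\<exists>m::nat. \<forall>a::rat. \<forall>b::rat. a \<noteq> 0 \<longrightarrow> b \<noteq> 0 \<longrightarrow>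
      \<bar>of_rat a\<bar> < 1 / real (Suc m) \<longrightarrow> \<bar>of_rat b\<bar> < 1 / real (Suc m) \<longrightarrow>
      \<bar>(g (r + of_rat a) - g r) / of_rat a - (g (r + of_rat b) - g r) / of_rat b\<bar> \<le> 1 / real (Suc k)"
  proof (intro exI allI impI)
    fix a b :: rat
    assume "a \<noteq> 0" "b \<noteq> 0" "\<bar>of_rat a\<bar> < 1 / real (Suc m)" "\<bar>of_rat b\<bar> < 1 / real (Suc m)"
    then have 1: "\<bar>(g (r + of_rat a) - g r) / of_rat a - D\<bar> < 1 / (2 * real (Suc k))"
      and 2: "\<bar>(g (r + of_rat b) - g r) / of_rat b - D\<bar> < 1 / (2 * real (Suc k))"
      using s(2) m by (auto simp: inverse_eq_divide)
    have 3: "1 / (2 * real (Suc k)) + 1 / (2 * real (Suc k)) = 1 / real (Suc k)" by (simp add: field_simps)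
    show "\<bar>(g (r + of_rat a) - g r) / of_rat a - (g (r + of_rat b) - g r) / of_rat b\<bar> \<le> 1 / real (Suc k)"
      using abs_tri2[OF 1 2 3] .
  qed
qed

lemma Cd_imp_diff:
  fixes g :: "real \<Rightarrow> real"
  assumes cont: "continuous_on UNIV g"
  and C: "\<forall>k::nat. \<exists>m::nat. \<forall>a::rat. \<forall>b::rat. a \<noteq> 0 \<longrightarrow> b \<noteq> 0 \<longrightarrow>
      \<bar>of_rat a\<bar> < 1 / real (Suc m) \<longrightarrow> \<bar>of_rat b\<bar> < 1 / real (Suc m) \<longrightarrow>
      \<bar>(g (r + of_rat a) - g r) / of_rat a - (g (r + of_rat b) - g r) / of_rat b\<bar> \<le> 1 / real (Suc k)"
  shows "\<exists>D. DERIV g r :> D"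
proof -
  define Q where "Q h = (g (r + h) - g r) / h" for h
  define s where "s n = Q (1 / real (Suc n))" for n
  have ofr: "real_of_rat (1 / of_nat (Suc n)) = 1 / real (Suc n)" for n
    by (simp add: of_rat_divide of_rat_add)
  have lt: "1 / real (Suc n) < 1 / real (Suc m)" if "n > m" for n m
    using that by (simp add: frac_less2)
  have Cs: "\<bar>Q (of_rat a) - s n\<bar> \<le> 1 / real (Suc k)"
    if "m = (SOME m. \<forall>a::rat. \<forall>b::rat. a \<noteq> 0 \<longrightarrow> b \<noteq> 0 \<longrightarrow>
      \<bar>of_rat a\<bar> < 1 / real (Suc m) \<longrightarrow> \<bar>of_rat b\<bar> < 1 / real (Suc m) \<longrightarrow>
      \<bar>(g (r + of_rat a) - g r) / of_rat a - (g (r + of_rat b) - g r) / of_rat b\<bar> \<le> 1 / real (Suc k))"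
       "a \<noteq> 0" "\<bar>of_rat a\<bar> < 1 / real (Suc m)" "n > m" for a k m n
  proof -
    from someI_ex[OF C[rule_format, of k]] that(1) have H: "\<forall>a::rat. \<forall>b::rat. a \<noteq> 0 \<longrightarrow> b \<noteq> 0 \<longrightarrow>
      \<bar>of_rat a\<bar> < 1 / real (Suc m) \<longrightarrow> \<bar>of_rat b\<bar> < 1 / real (Suc m) \<longrightarrow>
      \<bar>(g (r + of_rat a) - g r) / of_rat a - (g (r + of_rat b) - g r) / of_rat b\<bar> \<le> 1 / real (Suc k)"
      by simp
    have "\<bar>real_of_rat (1 / of_nat (Suc n))\<bar> < 1 / real (Suc m)" using ofr lt[OF that(4)] by simp
    moreover have "(1 / of_nat (Suc n) :: rat) \<noteq> 0" by simp
    ultimately show ?thesis using H[rule_format, OF that(2) _ that(3)] unfolding Q_def s_def ofr[symmetric]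
      by blast
  qed
  have "Cauchy s"
  proof (rule CauchyI)
    fix e :: real assume "0 < e"
    then obtain k where k: "inverse (real (Suc k)) < e" using reals_Archimedean by blast
    define m where "m = (SOME m. \<forall>a::rat. \<forall>b::rat. a \<noteq> 0 \<longrightarrow> b \<noteq> 0 \<longrightarrow>
      \<bar>of_rat a\<bar> < 1 / real (Suc m) \<longrightarrow> \<bar>of_rat b\<bar> < 1 / real (Suc m) \<longrightarrow>
      \<bar>(g (r + of_rat a) - g r) / of_rat a - (g (r + of_rat b) - g r) / of_rat b\<bar> \<le> 1 / real (Suc k))"
    show "\<exists>M. \<forall>m'\<ge>M. \<forall>n\<ge>M. norm (s m' - s n) < e"
    proof (intro exI allI impI)
      fix m' n assume "Suc m \<le> m'" "Suc m \<le> n"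
      have a: "(1 / of_nat (Suc m') :: rat) \<noteq> 0" by simp
      have b: "\<bar>real_of_rat (1 / of_nat (Suc m'))\<bar> < 1 / real (Suc m)"
        using ofr lt \<open>Suc m \<le> m'\<close> by simp
      have "\<bar>Q (real_of_rat (1 / of_nat (Suc m'))) - s n\<bar> \<le> 1 / real (Suc k)"
        by (rule Cs[OF m_def a b]) (use \<open>Suc m \<le> n\<close> in simp)
      then have "\<bar>s m' - s n\<bar> \<le> 1 / real (Suc k)" unfolding ofr s_def by simp
      then show "norm (s m' - s n) < e" using k by (simp add: inverse_eq_divide)
    qed
  qed
  then obtain D where D: "s \<longlonglongrightarrow> D" using Cauchy_convergent_iff convergent_def by blast
  have "(\<lambda>h. (g (r + h) - g r) / h) \<midarrow>0\<rightarrow> D"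
    unfolding LIM_eq
  proof (intro allI impI)
    fix e :: real assume "0 < e"
    then have "0 < e / 3" by simp
    then obtain k where k: "inverse (real (Suc k)) < e / 3" using reals_Archimedean by blast
    define m where "m = (SOME m. \<forall>a::rat. \<forall>b::rat. a \<noteq> 0 \<longrightarrow> b \<noteq> 0 \<longrightarrow>
      \<bar>of_rat a\<bar> < 1 / real (Suc m) \<longrightarrow> \<bar>of_rat b\<bar> < 1 / real (Suc m) \<longrightarrow>
      \<bar>(g (r + of_rat a) - g r) / of_rat a - (g (r + of_rat b) - g r) / of_rat b\<bar> \<le> 1 / real (Suc k))"
    show "\<exists>d>0. \<forall>h. h \<noteq> 0 \<and> norm (h - 0) < d \<longrightarrow> norm ((g (r + h) - g r) / h - D) < e"
    proof (intro exI conjI allI impI)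
      show "0 < 1 / real (Suc m)" by simp
      fix h :: real assume h: "h \<noteq> 0 \<and> norm (h - 0) < 1 / real (Suc m)"
      have gc: "isCont g x" for x using cont by (simp add: continuous_on_eq_continuous_at)
      have "isCont (\<lambda>x. g (r + x)) h" by (rule isCont_o2[OF _ gc]) (intro continuous_intros)
      then have "isCont Q h" unfolding Q_def using h
        by (intro continuous_intros) auto
      then obtain d where d: "d > 0" "\<And>x. x \<noteq> h \<Longrightarrow> \<bar>x - h\<bar> < d \<Longrightarrow> \<bar>Q x - Q h\<bar> < e / 3"
        unfolding isCont_def LIM_eq using \<open>0 < e / 3\<close> by (metis real_norm_def)
      define \<eta> where "\<eta> = min d (min (1 / real (Suc m) - \<bar>h\<bar>) \<bar>h\<bar>)"
      have "\<eta> > 0" using d h by (simp add: \<eta>_def)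
      then obtain a where a: "a \<in> \<rat>" "h < a" "a < h + \<eta>" using Rats_dense_in_real[of h "h + \<eta>"] by auto
      then obtain q where q: "a = of_rat q" using Rats_cases by blast
      have e1: "\<eta> \<le> d" "\<eta> \<le> 1 / real (Suc m) - \<bar>h\<bar>" "\<eta> \<le> \<bar>h\<bar>" by (auto simp: \<eta>_def)
      have a0: "a \<noteq> 0" using a(2,3) e1(3) by linarith
      have am: "\<bar>a\<bar> < 1 / real (Suc m)" using a(2,3) e1(2) h by linarith
      have q0: "q \<noteq> 0" using a0 q by auto
      have qm: "\<bar>of_rat q\<bar> < 1 / real (Suc m)" using am q by simp
      have 1: "\<bar>Q a - Q h\<bar> < e / 3" using d(2)[of a] a(2,3) e1(1) by auto
      obtain N where N: "\<And>n. n \<ge> N \<Longrightarrow> \<bar>s n - D\<bar> < e / 3" using LIMSEQ_D[OF D \<open>0 < e / 3\<close>] by auto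
      have 2: "\<bar>Q a - s (max N (Suc m))\<bar> \<le> 1 / real (Suc k)"
        unfolding q by (rule Cs[OF m_def q0 qm]) simp
      have 3: "\<bar>s (max N (Suc m)) - D\<bar> < e / 3" by (rule N) simp
      have 4: "1 / real (Suc k) < e / 3" using k by (simp add: inverse_eq_divide)
      show "norm ((g (r + h) - g r) / h - D) < e"
        using 1 2 3 4 unfolding Q_def[symmetric] real_norm_def by linarith
    qed
  qed
  then show ?thesis unfolding DERIV_def by blast
qed

lemma deriv_borel:
  fixes g :: "real \<Rightarrow> real"
  assumes cont: "continuous_on UNIV g"
  shows "deriv g \<in> borel_measurable borel"
proof -
  define Cd where "Cd r \<longleftrightarrow> (\<forall>k::nat. \<exists>m::nat. \<forall>a::rat. \<forall>b::rat. a \<noteq> 0 \<longrightarrow> b \<noteq> 0 \<longrightarrow>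
      \<bar>of_rat a\<bar> < 1 / real (Suc m) \<longrightarrow> \<bar>of_rat b\<bar> < 1 / real (Suc m) \<longrightarrow>
      \<bar>(g (r + of_rat a) - g r) / of_rat a - (g (r + of_rat b) - g r) / of_rat b\<bar> \<le> 1 / real (Suc k))" for r
  have iff: "Cd r \<longleftrightarrow> (\<exists>D. DERIV g r :> D)" for r
    using diff_imp_Cd[where g=g and r=r] Cd_imp_diff[OF cont, where r=r] unfolding Cd_def by blast
  have nd: "deriv g r = (SOME D. False)" if "\<not> Cd r" for r
  proof -
    have "(\<lambda>D. DERIV g r :> D) = (\<lambda>D. False)" using that iff by blast
    then show ?thesis unfolding deriv_def by simp
  qed
  have lim: "(\<lambda>n. (g (r + inverse (real (Suc n))) - g r) / inverse (real (Suc n))) \<longlonglongrightarrow> deriv g r"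
    if "Cd r" for r
  proof -
    from that iff obtain D where D: "DERIV g r :> D" by blast
    have "DERIV g r :> deriv g r" using D DERIV_imp_deriv[OF D] by simp
    then have L: "((\<lambda>h. (g (r + h) - g r) / h) \<longlongrightarrow> deriv g r) (at 0)" by (simp add: DERIV_def)
    have "filterlim (\<lambda>n. inverse (real (Suc n))) (at 0) sequentially"
      unfolding filterlim_at using LIMSEQ_inverse_real_of_nat by auto
    from filterlim_compose[OF L this] show ?thesis by simp
  qed
  define u where "u i r = (if Cd r then (g (r + inverse (real (Suc i))) - g r) / inverse (real (Suc i)) else (SOME D::real. False))" for i r
  have gm[measurable]: "g \<in> borel_measurable borel" using cont by (rule borel_measurable_continuous_onI)
  have Cdm[measurable]: "Measurable.pred borel Cd" unfolding Cd_def by measurable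
  have um: "u i \<in> borel_measurable borel" for i unfolding u_def by measurable
  show ?thesis
  proof (rule borel_measurable_LIMSEQ_real[OF _ um])
    fix r
    show "(\<lambda>i. u i r) \<longlonglongrightarrow> deriv g r"
    proof (cases "Cd r")
      case True
      then show ?thesis using lim[OF True] unfolding u_def by simp
    next
      case False
      then show ?thesis using nd[OF False] unfolding u_def by simp
    qed
  qed
qed

lemma pos_near0:
  fixes G :: "real \<Rightarrow> real"
  assumes "\<delta> > 0" "continuous_on {0..\<delta>} G" "G 0 > 0"
  shows "\<exists>s1. 0 < s1 \<and> s1 < \<delta> \<and> (\<forall>s. 0 \<le> s \<longrightarrow> s \<le> s1 \<longrightarrow> G s > 0)"
proof -
  have "0 \<in> {0..\<delta>}" using assms(1) by simp
  then obtain d where d: "d > 0" "\<And>x. x \<in> {0..\<delta>} \<Longrightarrow> dist x 0 < d \<Longrightarrow> dist (G x) (G 0) < G 0"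
    using assms(2) assms(3) unfolding continuous_on_iff by blast
  show ?thesis
  proof (intro exI conjI allI impI)
    show "0 < min (d/2) (\<delta>/2)" using d assms by simp
    show "min (d/2) (\<delta>/2) < \<delta>" using assms by simp
    fix s assume "0 \<le> s" "s \<le> min (d/2) (\<delta>/2)"
    then have "dist (G s) (G 0) < G 0" using d(1) by (intro d(2)) (auto simp: dist_real_def)
    then show "G s > 0" by (auto simp: dist_real_def)
  qed
qed

lemma mvt_pos:
  fixes g G :: "real \<Rightarrow> real"
  assumes "a < b" "continuous_on {a..b} g"
    "\<And>s. a < s \<Longrightarrow> s < b \<Longrightarrow> (g has_real_derivative G s) (at s)"
    "\<And>s. a < s \<Longrightarrow> s < b \<Longrightarrow> G s > 0"
  shows "g b > g a"
proof -
  obtain l z where z: "a < z" "z < b" "DERIV g z :> l" "g b - g a = (b - a) * l"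
    using MVT[OF assms(1,2)] assms(3) real_differentiable_def by blast
  have "l = G z" using DERIV_unique[OF z(3) assms(3)[OF z(1,2)]] .
  moreover have "(b - a) * G z > 0" using assms(1) assms(4)[OF z(1,2)] by simp
  ultimately show ?thesis using z(4) by simp
qed

lemma onesided_max:
  fixes g G1 G2 :: "real \<Rightarrow> real"
  assumes \<delta>: "\<delta> > 0"
  and cg: "continuous_on {0..\<delta>} g" and c1: "continuous_on {0..\<delta>} G1" and c2: "continuous_on {0..\<delta>} G2"
  and d1: "\<And>s. 0 < s \<Longrightarrow> s < \<delta> \<Longrightarrow> (g has_real_derivative G1 s) (at s)"
  and d2: "\<And>s. 0 < s \<Longrightarrow> s < \<delta> \<Longrightarrow> (G1 has_real_derivative G2 s) (at s)"
  and mx: "\<And>s. 0 \<le> s \<Longrightarrow> s \<le> \<delta> \<Longrightarrow> g s \<le> g 0"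
  shows "G1 0 \<le> 0 \<and> (G1 0 = 0 \<longrightarrow> G2 0 \<le> 0)"
proof (intro conjI impI)
  show "G1 0 \<le> 0"
  proof (rule ccontr)
    assume "\<not> G1 0 \<le> 0"
    then obtain s1 where s1: "0 < s1" "s1 < \<delta>" "\<And>s. 0 \<le> s \<Longrightarrow> s \<le> s1 \<Longrightarrow> G1 s > 0"
      using pos_near0[OF \<delta> c1] by auto
    have "g s1 > g 0"
      by (rule mvt_pos[where G=G1, OF s1(1) continuous_on_subset[OF cg]]) (use s1 d1 in auto)
    with mx[of s1] s1 show False by auto
  qed
next
  assume z: "G1 0 = 0"
  show "G2 0 \<le> 0"
  proof (rule ccontr)
    assume "\<not> G2 0 \<le> 0"
    then obtain s1 where s1: "0 < s1" "s1 < \<delta>" "\<And>s. 0 \<le> s \<Longrightarrow> s \<le> s1 \<Longrightarrow> G2 s > 0"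
      using pos_near0[OF \<delta> c2] by auto
    have pos: "G1 s > 0" if "0 < s" "s \<le> s1" for s
    proof -
      have "G1 s > G1 0"
        by (rule mvt_pos[where G=G2, OF that(1) continuous_on_subset[OF c1]]) (use s1 d2 that in auto)
      then show ?thesis using z by simp
    qed
    have "g s1 > g 0"
      by (rule mvt_pos[where G=G1, OF s1(1) continuous_on_subset[OF cg]]) (use s1 d1 pos in auto)
    with mx[of s1] s1 show False by auto
  qed
qed

lemma bl_mv: "bounded_linear (\<lambda>A::real^'n^'m. A *v e)"
  unfolding linear_conv_bounded_linear[symmetric]
  by (rule linearI) (simp_all add: matrix_vector_mult_add_rdistrib scaleR_matrix_vector_assoc)

lemma cont_mv: "continuous_on S g \<Longrightarrow> continuous_on S (\<lambda>x. (g x :: real^'n^'m) *v e)"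
  using bounded_linear.continuous_on[OF bl_mv] .

lemma line_deriv:
  fixes f :: "real^'n \<Rightarrow> 'b::real_inner"
  assumes "(f has_derivative F) (at (x1 + s *\<^sub>R e))" "linear F"
  shows "((\<lambda>s. f (x1 + s *\<^sub>R e)) has_derivative (\<lambda>h. h *\<^sub>R F e)) (at s)"
proof -
  have l: "((\<lambda>s. x1 + s *\<^sub>R e) has_derivative (\<lambda>h. h *\<^sub>R e)) (at s)"
    by (auto intro!: derivative_eq_intros)
  have "((f \<circ> (\<lambda>s. x1 + s *\<^sub>R e)) has_derivative (F \<circ> (\<lambda>h. h *\<^sub>R e))) (at s)"
    by (rule diff_chain_at[OF l assms(1)])
  moreover have "(F \<circ> (\<lambda>h. h *\<^sub>R e)) = (\<lambda>h. h *\<^sub>R F e)"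
    using assms(2) by (auto simp: linear_scale o_def)
  ultimately show ?thesis by (simp add: o_def)
qed

lemma dir_max:
  fixes f :: "real^'n \<Rightarrow> real" and fx :: "real^'n \<Rightarrow> real^'n" and fxx :: "real^'n \<Rightarrow> real^'n^'n"
  assumes cf: "continuous_on (closure \<Omega>) f" and cfx: "continuous_on (closure \<Omega>) fx"
    and cfxx: "continuous_on (closure \<Omega>) fxx"
  and df: "\<And>y. y \<in> \<Omega> \<Longrightarrow> (f has_derivative (\<lambda>h. fx y \<bullet> h)) (at y)"
  and dfx: "\<And>y. y \<in> \<Omega> \<Longrightarrow> (fx has_derivative (\<lambda>h. fxx y *v h)) (at y)"
  and x1: "x1 \<in> closure \<Omega>" and mx: "\<And>y. y \<in> closure \<Omega> \<Longrightarrow> f y \<le> f x1"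
  and dpos: "\<delta> > 0" and adm: "\<And>s. 0 < s \<Longrightarrow> s < \<delta> \<Longrightarrow> x1 + s *\<^sub>R e \<in> \<Omega>"
  shows "fx x1 \<bullet> e \<le> 0 \<and> (fx x1 \<bullet> e = 0 \<longrightarrow> (fxx x1 *v e) \<bullet> e \<le> 0)"
proof -
  define d where "d = \<delta> / 2"
  have d: "d > 0" "d < \<delta>" using dpos by (auto simp: d_def)
  have inC: "x1 + s *\<^sub>R e \<in> closure \<Omega>" if "0 \<le> s" "s \<le> d" for s
  proof (cases "s = 0")
    case True then show ?thesis using x1 by simp
  next
    case False then show ?thesis using adm[of s] that d closure_subset by auto
  qed
  have cl: "continuous_on {0..d} (\<lambda>s. x1 + s *\<^sub>R e)" by (intro continuous_intros)
  have img: "(\<lambda>s. x1 + s *\<^sub>R e) ` {0..d} \<subseteq> closure \<Omega>" using inC by auto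
  have c0: "continuous_on {0..d} (\<lambda>s. f (x1 + s *\<^sub>R e))"
    using continuous_on_compose2[OF cf cl img] .
  have c1: "continuous_on {0..d} (\<lambda>s. fx (x1 + s *\<^sub>R e) \<bullet> e)"
    using continuous_on_compose2[OF cfx cl img] by (intro continuous_intros)
  have c2: "continuous_on {0..d} (\<lambda>s. (fxx (x1 + s *\<^sub>R e) *v e) \<bullet> e)"
    using cont_mv[OF continuous_on_compose2[OF cfxx cl img]] by (intro continuous_intros)
  have d1: "((\<lambda>s. f (x1 + s *\<^sub>R e)) has_real_derivative (fx (x1 + s *\<^sub>R e) \<bullet> e)) (at s)"
    if "0 < s" "s < d" for s
  proof -
    have "x1 + s *\<^sub>R e \<in> \<Omega>" using adm that d by auto
    from line_deriv[OF df[OF this]] have "((\<lambda>s. f (x1 + s *\<^sub>R e)) has_derivative (\<lambda>h. h *\<^sub>R (fx (x1 + s *\<^sub>R e) \<bullet> e))) (at s)"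
      by (simp add: bounded_linear_inner_right bounded_linear.linear)
    then show ?thesis by (simp add: has_field_derivative_def mult_commute_abs)
  qed
  have d2: "((\<lambda>s. fx (x1 + s *\<^sub>R e) \<bullet> e) has_real_derivative ((fxx (x1 + s *\<^sub>R e) *v e) \<bullet> e)) (at s)"
    if "0 < s" "s < d" for s
  proof -
    have "x1 + s *\<^sub>R e \<in> \<Omega>" using adm that d by auto
    from line_deriv[OF dfx[OF this]] have "((\<lambda>s. fx (x1 + s *\<^sub>R e)) has_derivative (\<lambda>h. h *\<^sub>R (fxx (x1 + s *\<^sub>R e) *v e))) (at s)"
      by simp
    then have "((\<lambda>s. fx (x1 + s *\<^sub>R e) \<bullet> e) has_derivative (\<lambda>h. (h *\<^sub>R (fxx (x1 + s *\<^sub>R e) *v e)) \<bullet> e)) (at s)"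
      by (intro derivative_eq_intros) auto
    then show ?thesis by (simp add: has_field_derivative_def mult_commute_abs)
  qed
  have m: "f (x1 + s *\<^sub>R e) \<le> f (x1 + 0 *\<^sub>R e)" if "0 \<le> s" "s \<le> d" for s
    using mx[OF inC[OF that]] by simp
  from onesided_max[OF d(1) c0 c1 c2 d1 d2 m] show ?thesis by simp
qed

lemma diag_axis: "((H::real^'n^'n) *v axis i 1) \<bullet> axis i 1 = H $ i $ i"
  by (simp add: matrix_vector_mult_basis inner_axis column_def)

lemma quad_neg: "((H::real^'n^'n) *v (- w)) \<bullet> (- w) = (H *v w) \<bullet> w"
proof -
  have "H *v (- w) = - (H *v w)"
    using linear_neg[OF matrix_vector_mul_linear[of H]] by simp
  then show ?thesis by simp
qed

lemma quad_limit:
  fixes H :: "real^'n^'n"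
  assumes n: "norm n = 1" and hq: "\<And>e. e \<bullet> n < 0 \<Longrightarrow> (H *v e) \<bullet> e \<le> 0" and w: "w \<bullet> n \<le> 0"
  shows "(H *v w) \<bullet> w \<le> 0"
proof -
  have nn: "n \<bullet> n = 1" using n by (simp add: norm_eq_1)
  have lim: "((\<lambda>\<epsilon>. (H *v (w - \<epsilon> *\<^sub>R n)) \<bullet> (w - \<epsilon> *\<^sub>R n)) \<longlongrightarrow> (H *v (w - 0 *\<^sub>R n)) \<bullet> (w - 0 *\<^sub>R n)) (at_right 0)"
  proof -
    have c1: "isCont (\<lambda>\<epsilon>. w - \<epsilon> *\<^sub>R n) 0" by (intro continuous_intros)
    have c2: "isCont (\<lambda>\<epsilon>. H *v (w - \<epsilon> *\<^sub>R n)) 0"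
      using isCont_o2[OF c1 matrix_vector_mult_linear_continuous_at] .
    have "isCont (\<lambda>\<epsilon>. (H *v (w - \<epsilon> *\<^sub>R n)) \<bullet> (w - \<epsilon> *\<^sub>R n)) 0"
      using c1 c2 by (intro continuous_intros)
    then show ?thesis unfolding isCont_def by (rule tendsto_within_subset) simp
  qed
  have ev: "eventually (\<lambda>\<epsilon>. (H *v (w - \<epsilon> *\<^sub>R n)) \<bullet> (w - \<epsilon> *\<^sub>R n) \<le> 0) (at_right 0)"
    unfolding eventually_at_right_less
  proof -
    show "\<forall>\<^sub>F x in at_right 0. (H *v (w - x *\<^sub>R n)) \<bullet> (w - x *\<^sub>R n) \<le> 0"
      using eventually_at_right_less[of 0]
    proof (rule eventually_mono)
      fix x :: real assume "0 < x"
      then have "(w - x *\<^sub>R n) \<bullet> n < 0" using w nn by (simp add: inner_diff_left)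
      then show "(H *v (w - x *\<^sub>R n)) \<bullet> (w - x *\<^sub>R n) \<le> 0" by (rule hq)
    qed
  qed
  have "(H *v (w - 0 *\<^sub>R n)) \<bullet> (w - 0 *\<^sub>R n) \<le> 0"
    by (rule tendsto_upperbound[OF lim ev]) simp
  then show ?thesis by simp
qed

lemma max_point_cond:
  fixes f :: "real^'n \<Rightarrow> real" and fx :: "real^'n \<Rightarrow> real^'n" and fxx :: "real^'n \<Rightarrow> real^'n^'n"
  assumes op: "open \<Omega>"
  and cf: "continuous_on (closure \<Omega>) f" and cfx: "continuous_on (closure \<Omega>) fx"
    and cfxx: "continuous_on (closure \<Omega>) fxx"
  and df: "\<And>y. y \<in> \<Omega> \<Longrightarrow> (f has_derivative (\<lambda>h. fx y \<bullet> h)) (at y)"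
  and dfx: "\<And>y. y \<in> \<Omega> \<Longrightarrow> (fx has_derivative (\<lambda>h. fxx y *v h)) (at y)"
  and x1: "x1 \<in> closure \<Omega>" and mx: "\<And>y. y \<in> closure \<Omega> \<Longrightarrow> f y \<le> f x1"
  and bd: "x1 \<notin> \<Omega> \<Longrightarrow> norm n = 1 \<and> fx x1 \<bullet> n = 0 \<and>
            (\<forall>e. e \<bullet> n < 0 \<longrightarrow> (\<exists>\<delta>>0. \<forall>s. 0 < s \<longrightarrow> s < \<delta> \<longrightarrow> x1 + s *\<^sub>R e \<in> \<Omega>))"
  shows "fx x1 = 0 \<and> (\<forall>i. fxx x1 $ i $ i \<le> 0)"
proof -
  note DM = dir_max[OF cf cfx cfxx df dfx x1 mx]
  show ?thesis
  proof (cases "x1 \<in> \<Omega>")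
    case True
    then obtain r where r: "r > 0" "ball x1 r \<subseteq> \<Omega>" using op open_contains_ball by blast
    have all: "fx x1 \<bullet> e \<le> 0 \<and> (fx x1 \<bullet> e = 0 \<longrightarrow> (fxx x1 *v e) \<bullet> e \<le> 0)" for e
    proof (rule DM)
      have "norm e + 1 > 0" by (simp add: add_nonneg_pos)
      then show "0 < r / (norm e + 1)" using r by simp
      fix s :: real assume s: "0 < s" "s < r / (norm e + 1)"
      have "norm (s *\<^sub>R e) < r"
      proof -
        have "norm (s *\<^sub>R e) = s * norm e" using s by simp
        also have "\<dots> \<le> s * (norm e + 1)" using s by simp
        also have "\<dots> < r"
        proof -
          have p: "norm e + 1 > 0" by (simp add: add_nonneg_pos)
          show ?thesis using s(2) pos_less_divide_eq[OF p] by simp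
        qed
        finally show ?thesis .
      qed
      then show "x1 + s *\<^sub>R e \<in> \<Omega>" using r by (auto simp: dist_norm)
    qed
    have "fx x1 \<bullet> fx x1 \<le> 0" using all[of "fx x1"] by simp
    then have z: "fx x1 = 0" by (metis inner_gt_zero_iff not_le)
    show ?thesis using all z diag_axis by (metis inner_zero_left)
  next
    case False
    from bd[OF False] have n: "norm n = 1" and p: "fx x1 \<bullet> n = 0"
      and adm: "\<And>e. e \<bullet> n < 0 \<Longrightarrow> (\<exists>\<delta>>0. \<forall>s. 0 < s \<longrightarrow> s < \<delta> \<longrightarrow> x1 + s *\<^sub>R e \<in> \<Omega>)" by auto
    have nn: "n \<bullet> n = 1" using n by (simp add: norm_eq_1)
    have all: "fx x1 \<bullet> e \<le> 0 \<and> (fx x1 \<bullet> e = 0 \<longrightarrow> (fxx x1 *v e) \<bullet> e \<le> 0)" if "e \<bullet> n < 0" for e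
      using adm[OF that] DM by blast
    have "(fx x1 - n) \<bullet> n < 0" using p nn by (simp add: inner_diff_left)
    from all[OF this] have "fx x1 \<bullet> (fx x1 - n) \<le> 0" by simp
    then have "fx x1 \<bullet> fx x1 \<le> 0" using p by (simp add: inner_diff_right)
    then have z: "fx x1 = 0" by (metis inner_gt_zero_iff not_le)
    have hq: "(fxx x1 *v e) \<bullet> e \<le> 0" if "e \<bullet> n < 0" for e using all[OF that] z by simp
    have "fxx x1 $ i $ i \<le> 0" for i
    proof (cases "axis i 1 \<bullet> n \<le> 0")
      case True
      from quad_limit[OF n hq True] show ?thesis by (simp add: diag_axis)
    next
      case False
      then have "(- axis i 1) \<bullet> n \<le> 0" by simp
      from quad_limit[OF n hq this] show ?thesis unfolding quad_neg diag_axis .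
    qed
    then show ?thesis using z by simp
  qed
qed

lemma small_step_in_ball:
  fixes e :: "'a::real_normed_vector"
  assumes "r > 0" "0 < s" "s < r / (norm e + 1)"
  shows "x1 + s *\<^sub>R e \<in> ball x1 r"
proof -
  have p: "norm e + 1 > 0" by (simp add: add_nonneg_pos)
  have "norm (s *\<^sub>R e) = s * norm e" using assms by simp
  also have "\<dots> \<le> s * (norm e + 1)" using assms by simp
  also have "\<dots> < r" using assms(3) pos_less_divide_eq[OF p] by simp
  finally show ?thesis by (simp add: dist_norm)
qed

lemma boundary_adm:
  fixes \<Omega> :: "(real^'n) set"
  assumes dom: "bounded_C11_domain \<Omega> nrm" and x1: "x1 \<in> closure \<Omega>" "x1 \<notin> \<Omega>"
  shows "norm (nrm x1) = 1 \<and> (\<forall>e. e \<bullet> nrm x1 < 0 \<longrightarrow> (\<exists>\<delta>>0. \<forall>s. 0 < s \<longrightarrow> s < \<delta> \<longrightarrow> x1 + s *\<^sub>R e \<in> \<Omega>))"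
proof -
  have op: "open \<Omega>" using dom by (simp add: bounded_C11_domain_def)
  have fr: "x1 \<in> frontier \<Omega>" using x1 op by (simp add: frontier_def interior_open)
  then obtain \<delta> \<rho> g L where \<delta>: "\<delta> > 0"
    and der: "\<And>x. x \<in> ball x1 \<delta> \<Longrightarrow> (\<rho> has_derivative (\<lambda>h. g x \<bullet> h)) (at x)"
    and gnz: "\<And>x. x \<in> ball x1 \<delta> \<Longrightarrow> g x \<noteq> 0"
    and eq: "\<Omega> \<inter> ball x1 \<delta> = {x \<in> ball x1 \<delta>. \<rho> x < 0}"
    and nr: "nrm x1 = g x1 /\<^sub>R norm (g x1)"
    using dom unfolding bounded_C11_domain_def C11_boundary_with_normal_def by blast
  have x1b: "x1 \<in> ball x1 \<delta>" using \<delta> by simp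
  have g0: "g x1 \<noteq> 0" using gnz[OF x1b] .
  have n1: "norm (nrm x1) = 1" using g0 by (simp add: nr)
  have cont: "continuous_on (ball x1 \<delta>) \<rho>"
    using der has_derivative_continuous continuous_at_imp_continuous_on by blast
  have ge: "\<rho> x1 \<ge> 0"
  proof (rule ccontr)
    assume "\<not> \<rho> x1 \<ge> 0"
    then have "x1 \<in> \<Omega> \<inter> ball x1 \<delta>" using eq x1b by auto
    then show False using x1 by auto
  qed
  have le: "\<rho> x1 \<le> 0"
  proof (rule continuous_le_on_closure[where S="\<Omega> \<inter> ball x1 (\<delta>/2)"])
    have "closure (\<Omega> \<inter> ball x1 (\<delta>/2)) \<subseteq> ball x1 \<delta>"
    proof -
      have "closure (\<Omega> \<inter> ball x1 (\<delta>/2)) \<subseteq> cball x1 (\<delta>/2)"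
        by (rule closure_minimal) auto
      also have "\<dots> \<subseteq> ball x1 \<delta>" using \<delta> by (auto simp: subset_eq)
      finally show ?thesis .
    qed
    then show "continuous_on (closure (\<Omega> \<inter> ball x1 (\<delta> / 2))) \<rho>" using cont continuous_on_subset by blast
    have "ball x1 (\<delta>/2) \<inter> closure \<Omega> \<subseteq> closure (ball x1 (\<delta>/2) \<inter> \<Omega>)"
      by (rule open_Int_closure_subset) simp
    then show "x1 \<in> closure (\<Omega> \<inter> ball x1 (\<delta> / 2))" using x1 \<delta> by (auto simp: Int_commute)
    fix x assume "x \<in> \<Omega> \<inter> ball x1 (\<delta> / 2)"
    then have "x \<in> \<Omega> \<inter> ball x1 \<delta>" using \<delta> by auto
    then show "\<rho> x \<le> 0" using eq by auto
  qed
  have r0: "\<rho> x1 = 0" using ge le by simp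
  have adm: "\<exists>d>0. \<forall>s. 0 < s \<longrightarrow> s < d \<longrightarrow> x1 + s *\<^sub>R e \<in> \<Omega>" if e: "e \<bullet> nrm x1 < 0" for e
  proof -
    have "inverse (norm (g x1)) * (e \<bullet> g x1) < 0" using e by (simp add: nr)
    moreover have "inverse (norm (g x1)) > 0" using g0 by simp
    ultimately have ge0: "g x1 \<bullet> e < 0" by (simp add: inner_commute mult_less_0_iff)
    have "((\<lambda>s. \<rho> (x1 + s *\<^sub>R e)) has_derivative (\<lambda>h. h *\<^sub>R (g x1 \<bullet> e))) (at 0)"
      using line_deriv[where s=0, of \<rho> "\<lambda>h. g x1 \<bullet> h" x1 e] der[OF x1b] by (simp add: bounded_linear_inner_right bounded_linear.linear)
    then have D: "DERIV (\<lambda>s. \<rho> (x1 + s *\<^sub>R e)) 0 :> (g x1 \<bullet> e)"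
      by (simp add: has_field_derivative_def mult_commute_abs)
    obtain d where d: "d > 0" "\<And>h. h > 0 \<Longrightarrow> h < d \<Longrightarrow> \<rho> (x1 + h *\<^sub>R e) < 0"
      using DERIV_neg_dec_right[OF D ge0] r0 by auto
    show ?thesis
    proof (intro exI conjI allI impI)
      show "0 < min d (\<delta> / (norm e + 1))" using d \<delta> by (simp add: add_nonneg_pos)
      fix s assume s: "0 < s" "s < min d (\<delta> / (norm e + 1))"
      have "s < \<delta> / (norm e + 1)" using s by simp
      from small_step_in_ball[OF \<delta> s(1) this] have "x1 + s *\<^sub>R e \<in> ball x1 \<delta>" .
      moreover have "\<rho> (x1 + s *\<^sub>R e) < 0" using d(2) s by simp
      ultimately show "x1 + s *\<^sub>R e \<in> \<Omega>" using eq by blast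
    qed
  qed
  show ?thesis using n1 adm by blast
qed

lemma inv_sq_integrable:
  fixes r0 :: real assumes "r0 > 0"
  shows "set_integrable lborel {r0..} (\<lambda>x. 1 / x ^ 2)"
proof -
  have "(\<lambda>x. 1 / x ^ 2) integrable_on {r0..}"
    using has_integral_inverse_power_to_inf[of 2 r0] assms unfolding integrable_on_def by auto
  then have "(\<lambda>x::real. 1 / x ^ 2) absolutely_integrable_on {r0..}"
    by (rule nonnegative_absolutely_integrable_1) simp
  then have "integrable lebesgue (\<lambda>x. indicator {r0..} x *\<^sub>R (1 / x ^ 2))"
    unfolding set_integrable_def .
  moreover have "(\<lambda>x. indicator {r0..} x *\<^sub>R (1 / x ^ 2)) \<in> borel_measurable lborel"
    by measurable
  ultimately show ?thesis unfolding set_integrable_def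
    by (simp add: integrable_completion)
qed

lemma decay_integrable:
  fixes p :: "real \<Rightarrow> real"
  assumes r0: "r0 > 0" and cont: "continuous_on {r0..} p" and bnd: "\<And>r. r \<ge> r0 \<Longrightarrow> (1 + r) powr 2 * \<bar>p r\<bar> \<le> C"
  shows "set_integrable lborel {r0..} p"
proof -
  have C0: "C \<ge> 0" using bnd[of r0] r0 by (meson order.trans mult_nonneg_nonneg abs_ge_zero powr_ge_zero order_refl)
  have i: "set_integrable lborel {r0..} (\<lambda>x. C * (1 / x ^ 2))"
    using set_integrable_mult_right[OF inv_sq_integrable[OF r0], of C] by simp
  have m: "(\<lambda>x. indicator {r0..} x *\<^sub>R p x) \<in> borel_measurable lborel"
    using borel_measurable_continuous_on_indicator[OF _ cont] by simp
  show ?thesis unfolding set_integrable_def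
  proof (rule Bochner_Integration.integrable_bound[OF i[unfolded set_integrable_def] m])
    show "AE x in lborel. norm (indicator {r0..} x *\<^sub>R p x) \<le> norm (indicator {r0..} x *\<^sub>R (C * (1 / x ^ 2)))"
    proof (rule AE_I2)
      fix x :: real
      show "norm (indicator {r0..} x *\<^sub>R p x) \<le> norm (indicator {r0..} x *\<^sub>R (C * (1 / x ^ 2)))"
      proof (cases "x \<ge> r0")
        case True
        then have x0: "x > 0" using r0 by simp
        have pw: "(1 + x) powr 2 = (1 + x) ^ 2" using powr_realpow[of "1 + x" 2] x0 by simp
        have "(1 + x) ^ 2 * \<bar>p x\<bar> \<le> C" using bnd[OF True] pw by simp
        moreover have "x ^ 2 \<le> (1 + x) ^ 2" using x0 by (intro power_mono) auto
        ultimately have "x ^ 2 * \<bar>p x\<bar> \<le> C" by (meson abs_ge_zero mult_right_mono order_trans)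
        then have "\<bar>p x\<bar> \<le> C / x ^ 2" using x0 by (simp add: field_simps)
        then show ?thesis using True C0 by (simp add: indicator_def)
      next
        case False then show ?thesis by (simp add: indicator_def)
      qed
    qed
  qed
qed

lemma tau1_cont:
  fixes \<tau> :: "real \<Rightarrow> real"
  assumes lip: "\<exists>L. \<forall>a\<ge>r0. \<forall>b\<ge>r0. \<bar>\<tau> a - \<tau> b\<bar> \<le> L * \<bar>a - b\<bar>"
  shows "continuous_on UNIV (\<lambda>r. \<tau> (max r0 r))"
proof -
  obtain L where L: "\<And>a b. a \<ge> r0 \<Longrightarrow> b \<ge> r0 \<Longrightarrow> \<bar>\<tau> a - \<tau> b\<bar> \<le> L * \<bar>a - b\<bar>" using lip by blast
  have "\<bar>L\<bar>-lipschitz_on UNIV (\<lambda>r. \<tau> (max r0 r))"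
  proof (rule lipschitz_onI)
    fix x y :: real
    have "\<bar>\<tau> (max r0 x) - \<tau> (max r0 y)\<bar> \<le> L * \<bar>max r0 x - max r0 y\<bar>" by (rule L) auto
    also have "\<dots> \<le> \<bar>L\<bar> * \<bar>max r0 x - max r0 y\<bar>" by (simp add: mult_right_mono)
    also have "\<dots> \<le> \<bar>L\<bar> * \<bar>x - y\<bar>" by (intro mult_left_mono) (auto simp: max_def)
    finally show "dist (\<tau> (max r0 x)) (\<tau> (max r0 y)) \<le> \<bar>L\<bar> * dist x y" by (simp add: dist_real_def)
  qed simp
  then show ?thesis by (rule lipschitz_on_continuous_on)
qed

lemma deriv_tau1:
  fixes \<tau> :: "real \<Rightarrow> real"
  assumes "r > r0"
  shows "DERIV \<tau> r :> D \<longleftrightarrow> DERIV (\<lambda>r. \<tau> (max r0 r)) r :> D"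
proof -
  have eq: "\<And>x. x \<in> {r0<..} \<Longrightarrow> \<tau> x = \<tau> (max r0 x)" by auto
  show ?thesis
  proof
    assume "DERIV \<tau> r :> D"
    then show "DERIV (\<lambda>r. \<tau> (max r0 r)) r :> D"
      by (rule has_field_derivative_transform_within_open[where S="{r0<..}"]) (use assms eq in auto)
  next
    assume "DERIV (\<lambda>r. \<tau> (max r0 r)) r :> D"
    then show "DERIV \<tau> r :> D"
      by (rule has_field_derivative_transform_within_open[where S="{r0<..}"]) (use assms eq in auto)
  qed
qed

lemma deriv_tau1_eq:
  fixes \<tau> :: "real \<Rightarrow> real"
  assumes "r > r0"
  shows "deriv \<tau> r = deriv (\<lambda>r. \<tau> (max r0 r)) r"
  unfolding deriv_def using deriv_tau1[OF assms] by simp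

lemma mono_deriv_nonneg:
  fixes \<tau> :: "real \<Rightarrow> real"
  assumes mono: "mono_on {r0..} \<tau>" and r: "r > r0" and D: "DERIV \<tau> r :> D"
  shows "D \<ge> 0"
proof (rule ccontr)
  assume "\<not> D \<ge> 0"
  then have "D < 0" by simp
  from DERIV_neg_dec_right[OF D this] obtain d where d: "d > 0" "\<And>h. h > 0 \<Longrightarrow> h < d \<Longrightarrow> \<tau> r > \<tau> (r + h)" by blast
  have "\<tau> r \<le> \<tau> (r + d/2)" using mono r d(1) by (intro mono_onD[OF mono]) auto
  moreover have "\<tau> r > \<tau> (r + d/2)" using d by simp
  ultimately show False by simp
qed

lemma f1_meas:
  fixes \<tau> p :: "real \<Rightarrow> real"
  assumes lip: "\<exists>L. \<forall>a\<ge>r0. \<forall>b\<ge>r0. \<bar>\<tau> a - \<tau> b\<bar> \<le> L * \<bar>a - b\<bar>"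
    and pc: "continuous_on {r0..} p"
  shows "(\<lambda>r. indicator {r0..} r * ((\<tau> r + r * deriv \<tau> r) * p r)) \<in> borel_measurable borel"
proof -
  define \<tau>1 where "\<tau>1 = (\<lambda>r. \<tau> (max r0 r))"
  define p1 where "p1 = (\<lambda>r. p (max r0 r))"
  have c1: "continuous_on UNIV \<tau>1" unfolding \<tau>1_def by (rule tau1_cont[OF lip])
  have m1[measurable]: "\<tau>1 \<in> borel_measurable borel" using c1 by (rule borel_measurable_continuous_onI)
  have m2[measurable]: "deriv \<tau>1 \<in> borel_measurable borel" using c1 by (rule deriv_borel)
  have "continuous_on UNIV p1" unfolding p1_def
    by (rule continuous_on_compose2[OF pc]) (auto intro: continuous_intros)
  then have m3[measurable]: "p1 \<in> borel_measurable borel" by (rule borel_measurable_continuous_onI)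
  have eq: "(\<lambda>r. indicator {r0..} r * ((\<tau> r + r * deriv \<tau> r) * p r)) =
    (\<lambda>r. if r = r0 then (\<tau> r0 + r0 * deriv \<tau> r0) * p r0 else indicator {r0<..} r * ((\<tau>1 r + r * deriv \<tau>1 r) * p1 r))"
  proof
    fix r :: real
    consider "r = r0" | "r > r0" | "r < r0" by linarith
    then show "indicator {r0..} r * ((\<tau> r + r * deriv \<tau> r) * p r) =
      (if r = r0 then (\<tau> r0 + r0 * deriv \<tau> r0) * p r0 else indicator {r0<..} r * ((\<tau>1 r + r * deriv \<tau>1 r) * p1 r))"
    proof cases
      case 2
      then show ?thesis using deriv_tau1_eq[OF 2, of \<tau>] by (simp add: \<tau>1_def p1_def indicator_def)
    qed (auto simp: indicator_def)
  qed
  show ?thesis unfolding eq by measurable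
qed

lemma int_le_nonneg:
  fixes f g :: "'a \<Rightarrow> real"
  assumes "integrable M g" "\<And>x. f x \<le> g x" "\<And>x. 0 \<le> g x"
  shows "integral\<^sup>L M f \<le> integral\<^sup>L M g"
proof (cases "integrable M f")
  case True
  then show ?thesis using assms by (intro integral_mono) auto
next
  case False
  then show ?thesis using assms by (simp add: not_integrable_integral_eq)
qed

lemma source_ineq:
  fixes \<tau> bb p :: "real \<Rightarrow> real" and \<kappa> :: "real \<Rightarrow> real \<Rightarrow> real"
  assumes r0: "r0 > 0" and K: "K > 0"
   and pc: "continuous_on {r0..} p" and pnn: "\<And>r. r \<ge> r0 \<Longrightarrow> p r \<ge> 0"
   and pd: "\<And>r. r \<ge> r0 \<Longrightarrow> (1 + r) powr 2 * \<bar>p r\<bar> \<le> C"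
   and mono: "mono_on {r0..} \<tau>" and tnn: "\<forall>r\<ge>r0. \<tau> r \<ge> 0"
   and lip: "\<exists>L. \<forall>a\<ge>r0. \<forall>b\<ge>r0. \<bar>\<tau> a - \<tau> b\<bar> \<le> L * \<bar>a - b\<bar>"
   and ineq: "AE r in lborel. r > r0 \<longrightarrow>
                  \<tau> differentiable (at r) \<and>
                  r0 / K \<le> \<tau> r + r * deriv \<tau> r \<and>
                  \<tau> r + deriv \<tau> r + r * deriv \<tau> r + \<tau> r / r \<le> K"
   and bb: "\<And>rt. rt > r0 \<Longrightarrow> 0 < bb rt \<and> bb rt \<le> K"
   and A4: "\<forall>r rt. \<kappa> r rt = (if rt > r0 \<and> 0 < r \<and> r < rt then 1 / rt else 0)"
   and ph: "ph \<ge> K\<^sup>2"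
  shows "- ph * (LINT r:{r0..}|lborel. (\<tau> r + r * deriv \<tau> r) * p r)
          + 2 * (LINT r:{0..r0}|lborel. r * (LINT rt:{r0..}|lborel. bb rt * \<kappa> r rt * p rt)) \<le> 0"
proof -
  define J where "J = (LINT r:{r0..}|lborel. p r)"
  have pint: "set_integrable lborel {r0..} p" by (rule decay_integrable[OF r0 pc pd])
  have J0: "J \<ge> 0" unfolding J_def set_lebesgue_integral_def
    by (rule integral_nonneg_AE) (auto simp: indicator_def pnn)
  have Kpint: "set_integrable lborel {r0..} (\<lambda>r. K * p r)" using set_integrable_mult_right[OF pint] .
  have lpint: "set_integrable lborel {r0..} (\<lambda>r. (r0 / K) * p r)" using set_integrable_mult_right[OF pint] .
  have AEb: "AE r in lborel. r \<ge> r0 \<longrightarrow> (r0 / K) * p r \<le> (\<tau> r + r * deriv \<tau> r) * p r \<and> (\<tau> r + r * deriv \<tau> r) * p r \<le> K * p r"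
    using ineq AE_lborel_singleton[of r0]
  proof eventually_elim
    case (elim r)
    show ?case
    proof
      assume "r \<ge> r0"
      then have rr: "r > r0" using elim by simp
      with elim have dif: "\<tau> differentiable (at r)" and lo: "r0 / K \<le> \<tau> r + r * deriv \<tau> r"
        and up: "\<tau> r + deriv \<tau> r + r * deriv \<tau> r + \<tau> r / r \<le> K" by auto
      from dif obtain D where D: "DERIV \<tau> r :> D" using real_differentiable_def by blast
      have "deriv \<tau> r = D" using DERIV_imp_deriv[OF D] .
      then have dn: "deriv \<tau> r \<ge> 0" using mono_deriv_nonneg[OF mono rr D] by simp
      have "\<tau> r / r \<ge> 0" using tnn rr r0 by simp
      then have up2: "\<tau> r + r * deriv \<tau> r \<le> K" using up dn by linarith
      have pp: "p r \<ge> 0" using pnn rr by simp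
      show "(r0 / K) * p r \<le> (\<tau> r + r * deriv \<tau> r) * p r \<and> (\<tau> r + r * deriv \<tau> r) * p r \<le> K * p r"
        using mult_right_mono[OF lo pp] mult_right_mono[OF up2 pp] by simp
    qed
  qed
  have f1m: "(\<lambda>r. indicator {r0..} r *\<^sub>R ((\<tau> r + r * deriv \<tau> r) * p r)) \<in> borel_measurable lborel"
    using f1_meas[OF lip pc] by simp
  have f1int: "set_integrable lborel {r0..} (\<lambda>r. (\<tau> r + r * deriv \<tau> r) * p r)"
    unfolding set_integrable_def
  proof (rule Bochner_Integration.integrable_bound[OF Kpint[unfolded set_integrable_def] f1m])
    show "AE x in lborel. norm (indicator {r0..} x *\<^sub>R ((\<tau> x + x * deriv \<tau> x) * p x)) \<le> norm (indicator {r0..} x *\<^sub>R (K * p x))"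
      using AEb
    proof eventually_elim
      case (elim x)
      show ?case
      proof (cases "x \<ge> r0")
        case True
        have "0 \<le> (r0 / K) * p x" using pnn[OF True] r0 K by simp
        then show ?thesis using elim True by (simp add: indicator_def)
      qed (simp add: indicator_def)
    qed
  qed
  have I1: "(LINT r:{r0..}|lborel. (\<tau> r + r * deriv \<tau> r) * p r) \<ge> (r0 / K) * J"
  proof -
    have "(LINT r:{r0..}|lborel. (r0 / K) * p r) \<le> (LINT r:{r0..}|lborel. (\<tau> r + r * deriv \<tau> r) * p r)"
      unfolding set_lebesgue_integral_def
    proof (rule integral_mono_AE[OF lpint[unfolded set_integrable_def] f1int[unfolded set_integrable_def]])
      show "AE x in lborel. indicator {r0..} x *\<^sub>R (r0 / K * p x) \<le> indicator {r0..} x *\<^sub>R ((\<tau> x + x * deriv \<tau> x) * p x)"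
        using AEb by eventually_elim (auto simp: indicator_def)
    qed
    moreover have "(LINT r:{r0..}|lborel. (r0 / K) * p r) = (r0 / K) * J"
      unfolding J_def by (rule set_integral_mult_right)
    ultimately show ?thesis by linarith
  qed
  have inner: "(LINT rt:{r0..}|lborel. bb rt * \<kappa> r rt * p rt) \<le> (K / r0) * J" for r
  proof -
    have "(LINT rt:{r0..}|lborel. bb rt * \<kappa> r rt * p rt) \<le> (LINT rt:{r0..}|lborel. (K / r0) * p rt)"
      unfolding set_lebesgue_integral_def
    proof (rule int_le_nonneg)
      show "integrable lborel (\<lambda>x. indicator {r0..} x *\<^sub>R (K / r0 * p x))"
        using set_integrable_mult_right[OF pint, of "K / r0"] unfolding set_integrable_def .
      fix x :: real
      show "0 \<le> indicator {r0..} x *\<^sub>R (K / r0 * p x)"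
        using pnn[of x] K r0 by (simp add: indicator_def)
      show "indicator {r0..} x *\<^sub>R (bb x * \<kappa> r x * p x) \<le> indicator {r0..} x *\<^sub>R (K / r0 * p x)"
      proof (cases "x > r0 \<and> 0 < r \<and> r < x")
        case True
        then have k: "\<kappa> r x = 1 / x" using A4 by simp
        have x0: "x > 0" using True r0 by simp
        have pp: "p x \<ge> 0" using pnn True by simp
        have b: "0 < bb x" "bb x \<le> K" using bb True by auto
        have "1 / x \<le> 1 / r0" using True r0 by (simp add: frac_le)
        then have "bb x * (1 / x) \<le> K * (1 / r0)" using b x0 K by (intro mult_mono) auto
        then have "bb x * (1 / x) * p x \<le> K * (1 / r0) * p x" using pp by (rule mult_right_mono)
        then show ?thesis using True k by (simp add: indicator_def)
      next
        case False
        then have k: "\<kappa> r x = 0" using A4 by simp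
        show ?thesis using k pnn[of x] K r0 by (simp add: indicator_def)
      qed
    qed
    also have "\<dots> = (K / r0) * J" unfolding J_def by (rule set_integral_mult_right)
    finally show ?thesis .
  qed
  define c where "c = (K / r0) * J"
  have c0: "c \<ge> 0" using K r0 J0 by (simp add: c_def)
  have I2: "(LINT r:{0..r0}|lborel. r * (LINT rt:{r0..}|lborel. bb rt * \<kappa> r rt * p rt)) \<le> c * (r0 ^ 2 / 2)"
  proof -
    have "(LINT r:{0..r0}|lborel. r * (LINT rt:{r0..}|lborel. bb rt * \<kappa> r rt * p rt))
        \<le> (\<integral>r. c * (r ^ 1 * indicator {0..r0} r) \<partial>lborel)"
      unfolding set_lebesgue_integral_def[where A="{0..r0}"]
    proof (rule int_le_nonneg)
      show "integrable lborel (\<lambda>r. c * (r ^ 1 * indicator {0..r0} r))"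
        by (intro integrable_mult_right borel_integrable_atLeastAtMost) (auto intro: continuous_intros)
      fix x :: real
      show "0 \<le> c * (x ^ 1 * indicator {0..r0} x)" using c0 by (simp add: indicator_def)
      show "indicator {0..r0} x *\<^sub>R (x * (LINT rt:{r0..}|lborel. bb rt * \<kappa> x rt * p rt)) \<le> c * (x ^ 1 * indicator {0..r0} x)"
      proof (cases "x \<in> {0..r0}")
        case True
        then have "x * (LINT rt:{r0..}|lborel. bb rt * \<kappa> x rt * p rt) \<le> x * c"
          using inner[of x] unfolding c_def by (intro mult_left_mono) auto
        then show ?thesis using True by (simp add: indicator_def mult.commute)
      qed (auto simp: indicator_def)
    qed
    also have "\<dots> = c * (r0 ^ 2 / 2)"
      using integral_power[of 0 r0 1] r0 by (simp add: integral_mult_right_zero power2_eq_square)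
    finally show ?thesis .
  qed
  define I1v where "I1v = (LINT r:{r0..}|lborel. (\<tau> r + r * deriv \<tau> r) * p r)"
  have ph0: "ph \<ge> 0" using ph by (meson order.trans zero_le_power2)
  have "ph * ((r0 / K) * J) \<le> ph * I1v" using mult_left_mono[OF I1 ph0] unfolding I1v_def .
  then have "- ph * I1v \<le> - ph * ((r0 / K) * J)" by simp
  moreover have "- ph * ((r0 / K) * J) + 2 * (c * (r0 ^ 2 / 2)) = J * r0 * (K - ph / K)"
    using K r0 unfolding c_def by (simp add: field_simps power2_eq_square)
  moreover have "K - ph / K \<le> 0"
  proof -
    have "ph / K \<ge> K\<^sup>2 / K" using ph K by (simp add: divide_right_mono)
    then show ?thesis using K by (simp add: power2_eq_square)
  qed
  moreover have "J * r0 \<ge> 0" using J0 r0 by simp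
  ultimately have "- ph * I1v + 2 * (c * (r0 ^ 2 / 2)) \<le> 0"
    by (smt (verit) mult_nonneg_nonpos)
  then show ?thesis using I2 unfolding I1v_def by linarith
qed

lemma ball_emeasure_pos:
  fixes c :: "'a::euclidean_space"
  assumes "r > 0"
  shows "emeasure lborel (ball c r) \<noteq> 0"
proof -
  have "measure lborel (ball c r) > 0" using content_ball_pos[OF assms] .
  then show ?thesis
    using emeasure_lborel_ball_finite[of c r] by (simp add: emeasure_eq_ennreal_measure)
qed

lemma pt_le_esssup:
  fixes f :: "'a::euclidean_space \<Rightarrow> real"
  assumes op: "open \<Omega>" and cont: "continuous_on \<Omega> f" and x: "x \<in> \<Omega>"
  shows "ereal \<bar>f x\<bar> \<le> esssup (restrict_space lborel \<Omega>) (\<lambda>y. ereal \<bar>f y\<bar>)"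
proof (rule ccontr)
  let ?M = "restrict_space lborel \<Omega>"
  let ?F = "\<lambda>y. ereal \<bar>f y\<bar>"
  assume "\<not> ?thesis"
  then have lt: "esssup ?M ?F < ereal \<bar>f x\<bar>" by simp
  then have meas: "?F \<in> borel_measurable ?M"
    using esssup_non_measurable[of ?F ?M] by (metis top.not_eq_extremum top_greatest leD)
  obtain c where c: "esssup ?M ?F < ereal c" "ereal c < ereal \<bar>f x\<bar>" using ereal_dense2[OF lt] by blast
  have ca: "continuous_on \<Omega> (\<lambda>y. \<bar>f y\<bar>)" using cont by (intro continuous_intros)
  have "open ((\<lambda>y. \<bar>f y\<bar>) -` {c<..} \<inter> \<Omega>)"
    using continuous_on_open_vimage[OF op, THEN iffD1, OF ca] by simp
  then have "open (\<Omega> \<inter> (\<lambda>y. \<bar>f y\<bar>) -` {c<..})" by (simp add: Int_commute)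
  moreover have "x \<in> \<Omega> \<inter> (\<lambda>y. \<bar>f y\<bar>) -` {c<..}" using x c(2) by simp
  ultimately obtain r where r: "r > 0" "ball x r \<subseteq> \<Omega> \<inter> (\<lambda>y. \<bar>f y\<bar>) -` {c<..}"
    using open_contains_ball by blast
  have sub: "ball x r \<subseteq> {y \<in> space ?M. ?F y > esssup ?M ?F}"
  proof
    fix y assume "y \<in> ball x r"
    then have "y \<in> \<Omega>" "\<bar>f y\<bar> > c" using r by auto
    then show "y \<in> {y \<in> space ?M. ?F y > esssup ?M ?F}" using c(1)
      by (auto simp: space_restrict_space intro: less_trans)
  qed
  have "{y \<in> space ?M. ?F y > esssup ?M ?F} \<in> sets ?M" using meas by measurable
  then have "emeasure ?M (ball x r) \<le> emeasure ?M {y \<in> space ?M. ?F y > esssup ?M ?F}"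
    by (rule emeasure_mono[OF sub])
  also have "\<dots> = 0" by (rule esssup_zero_measure)
  finally have z: "emeasure ?M (ball x r) = 0" by simp
  have "emeasure ?M (ball x r) = emeasure lborel (ball x r)"
    using r op by (intro emeasure_restrict_space) auto
  then show False using z ball_emeasure_pos[OF r(1), of x] by simp
qed

lemma esssup_le_pointwise:
  fixes f :: "'a::euclidean_space \<Rightarrow> real"
  assumes cont: "continuous_on \<Omega> f" and op: "open \<Omega>" and le: "\<And>x. x \<in> \<Omega> \<Longrightarrow> ereal \<bar>f x\<bar> \<le> c"
  shows "esssup (restrict_space lborel \<Omega>) (\<lambda>y. ereal \<bar>f y\<bar>) \<le> c"
proof (rule esssup_I)
  have "f \<in> borel_measurable (restrict_space borel \<Omega>)" using cont by (rule borel_measurable_continuous_on_restrict)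
  then have "f \<in> borel_measurable (restrict_space lborel \<Omega>)"
    by (simp add: measurable_def space_restrict_space sets_restrict_space)
  then show "(\<lambda>y. ereal \<bar>f y\<bar>) \<in> borel_measurable (restrict_space lborel \<Omega>)" by measurable
  show "AE x in restrict_space lborel \<Omega>. ereal \<bar>f x\<bar> \<le> c"
    using op by (intro AE_I2) (auto simp: space_restrict_space le)
qed

lemma esssup_eq_SUP_dense:
  fixes f :: "'a::euclidean_space \<Rightarrow> real"
  assumes op: "open \<Omega>" and cont: "continuous_on \<Omega> f" and DO: "D \<subseteq> \<Omega>"
    and dense: "\<And>U. open U \<Longrightarrow> U \<inter> \<Omega> \<noteq> {} \<Longrightarrow> \<exists>d\<in>D. d \<in> U"
  shows "esssup (restrict_space lborel \<Omega>) (\<lambda>y. ereal \<bar>f y\<bar>) = (SUP d\<in>D. ereal \<bar>f d\<bar>)"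
proof (rule antisym)
  show "esssup (restrict_space lborel \<Omega>) (\<lambda>y. ereal \<bar>f y\<bar>) \<le> (SUP d\<in>D. ereal \<bar>f d\<bar>)"
  proof (rule esssup_le_pointwise[OF cont op])
    fix x assume x: "x \<in> \<Omega>"
    show "ereal \<bar>f x\<bar> \<le> (SUP d\<in>D. ereal \<bar>f d\<bar>)"
    proof (rule ccontr)
      assume "\<not> ?thesis"
      then have "(SUP d\<in>D. ereal \<bar>f d\<bar>) < ereal \<bar>f x\<bar>" by simp
      then obtain c where c: "(SUP d\<in>D. ereal \<bar>f d\<bar>) < ereal c" "ereal c < ereal \<bar>f x\<bar>"
        using ereal_dense2 by blast
      have ca: "continuous_on \<Omega> (\<lambda>y. \<bar>f y\<bar>)" using cont by (intro continuous_intros)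
      have "open ((\<lambda>y. \<bar>f y\<bar>) -` {c<..} \<inter> \<Omega>)"
        using continuous_on_open_vimage[OF op, THEN iffD1, OF ca] by simp
      moreover have "x \<in> ((\<lambda>y. \<bar>f y\<bar>) -` {c<..} \<inter> \<Omega>) \<inter> \<Omega>" using x c(2) by simp
      ultimately obtain d where d: "d \<in> D" "d \<in> (\<lambda>y. \<bar>f y\<bar>) -` {c<..} \<inter> \<Omega>"
        using dense by blast
      have "ereal \<bar>f d\<bar> \<le> (SUP d\<in>D. ereal \<bar>f d\<bar>)" using d(1) by (rule SUP_upper)
      moreover have "ereal c < ereal \<bar>f d\<bar>" using d(2) by simp
      ultimately have "ereal c < (SUP d\<in>D. ereal \<bar>f d\<bar>)" by (meson less_le_trans)
      then show False using c(1) by simp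
    qed
  qed
  show "(SUP d\<in>D. ereal \<bar>f d\<bar>) \<le> esssup (restrict_space lborel \<Omega>) (\<lambda>y. ereal \<bar>f y\<bar>)"
    using pt_le_esssup[OF op cont] DO by (auto intro!: SUP_least)
qed

lemma Linf_meas:
  fixes \<phi> :: "real \<Rightarrow> real^'n \<Rightarrow> real"
  assumes op: "open \<Omega>" and c\<phi>: "continuous_on ({0..T} \<times> closure \<Omega>) (\<lambda>(t,x). \<phi> t x)"
  shows "(\<lambda>t. Linf_norm \<Omega> (\<phi> t)) \<in> borel_measurable (restrict_space lborel {0<..<T})"
proof -
  obtain D0 :: "(real^'n) set" where D0: "countable D0" "\<And>U. open U \<Longrightarrow> U \<noteq> {} \<Longrightarrow> \<exists>d\<in>D0. d \<in> U"
    using countable_dense_exists by blast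
  define D where "D = D0 \<inter> \<Omega>"
  have cD: "countable D" using D0(1) by (simp add: D_def)
  have DO: "D \<subseteq> \<Omega>" by (simp add: D_def)
  have dense: "\<exists>d\<in>D. d \<in> U" if "open U" "U \<inter> \<Omega> \<noteq> {}" for U
  proof -
    from D0(2)[of "U \<inter> \<Omega>"] that op obtain d where "d \<in> D0" "d \<in> U \<inter> \<Omega>" by auto
    then show ?thesis by (auto simp: D_def)
  qed
  have ct: "continuous_on \<Omega> (\<phi> t)" if "t \<in> {0<..<T}" for t
  proof -
    have "continuous_on \<Omega> (\<lambda>x. (\<lambda>(t,x). \<phi> t x) (t, x))"
      by (rule continuous_on_compose2[OF c\<phi>]) (use that closure_subset in \<open>auto intro!: continuous_intros\<close>)
    then show ?thesis by simp
  qed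
  have cx: "continuous_on {0<..<T} (\<lambda>t. \<phi> t d)" if "d \<in> D" for d
  proof -
    have "continuous_on {0<..<T} (\<lambda>t. (\<lambda>(t,x). \<phi> t x) (t, d))"
      by (rule continuous_on_compose2[OF c\<phi>]) (use that DO closure_subset in \<open>auto intro!: continuous_intros\<close>)
    then show ?thesis by simp
  qed
  have md: "(\<lambda>t. ereal \<bar>\<phi> t d\<bar>) \<in> borel_measurable (restrict_space lborel {0<..<T})" if "d \<in> D" for d
  proof -
    have "(\<lambda>t. \<phi> t d) \<in> borel_measurable (restrict_space borel {0<..<T})"
      using cx[OF that] by (rule borel_measurable_continuous_on_restrict)
    then have "(\<lambda>t. \<phi> t d) \<in> borel_measurable (restrict_space lborel {0<..<T})"
      by (simp add: measurable_def space_restrict_space sets_restrict_space)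
    then show ?thesis by measurable
  qed
  have "(\<lambda>t. SUP d\<in>D. ereal \<bar>\<phi> t d\<bar>) \<in> borel_measurable (restrict_space lborel {0<..<T})"
    using cD md by (rule borel_measurable_SUP)
  moreover have "Linf_norm \<Omega> (\<phi> t) = (SUP d\<in>D. ereal \<bar>\<phi> t d\<bar>)" if "t \<in> space (restrict_space lborel {0<..<T})" for t
    unfolding Linf_norm_def
    by (rule esssup_eq_SUP_dense[OF op ct DO dense]) (use that in \<open>auto simp: space_restrict_space\<close>)
  ultimately show ?thesis using measurable_cong by (smt (verit))
qed

lemma time_deriv_ge:
  fixes \<phi> \<phi>t :: "real \<Rightarrow> real^'n \<Rightarrow> real"
  assumes c\<phi>: "continuous_on ({0..T} \<times> closure \<Omega>) (\<lambda>(t,x). \<phi> t x)"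
   and c\<phi>t: "continuous_on ({0..T} \<times> closure \<Omega>) (\<lambda>(t,x). \<phi>t t x)"
   and d\<phi>: "\<And>t x. t \<in> {0<..<T} \<Longrightarrow> x \<in> \<Omega> \<Longrightarrow> ((\<lambda>s. \<phi> s x) has_real_derivative \<phi>t t x) (at t)"
   and t1: "0 < t1" "t1 < T" and x1: "x1 \<in> closure \<Omega>" and \<epsilon>: "\<epsilon> > 0"
   and mx: "\<And>s. 0 \<le> s \<Longrightarrow> s \<le> t1 \<Longrightarrow> \<phi> s x1 - \<epsilon> * (1 + s) \<le> \<phi> t1 x1 - \<epsilon> * (1 + t1)"
  shows "\<phi>t t1 x1 \<ge> \<epsilon>"
proof (rule ccontr)
  assume "\<not> \<phi>t t1 x1 \<ge> \<epsilon>"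
  define \<eta> where "\<eta> = \<epsilon> - \<phi>t t1 x1"
  have \<eta>: "\<eta> > 0" using \<open>\<not> \<phi>t t1 x1 \<ge> \<epsilon>\<close> by (simp add: \<eta>_def)
  have p1: "(t1, x1) \<in> {0..T} \<times> closure \<Omega>" using t1 x1 by auto
  obtain d where d: "d > 0" and dc: "\<And>p. p \<in> {0..T} \<times> closure \<Omega> \<Longrightarrow> dist p (t1, x1) < d \<Longrightarrow>
      dist ((\<lambda>(t,x). \<phi>t t x) p) ((\<lambda>(t,x). \<phi>t t x) (t1, x1)) < \<eta> / 2"
    using c\<phi>t p1 \<eta> unfolding continuous_on_iff by (metis half_gt_zero)
  have near: "\<phi>t z y < \<phi>t t1 x1 + \<eta> / 2" if "z \<in> {0..T}" "y \<in> closure \<Omega>" "\<bar>z - t1\<bar> < d / 2" "dist y x1 < d / 2" for z y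
  proof -
    have s2: "d / 2 \<le> d / sqrt 2"
    proof -
      have "sqrt 2 \<le> 2" by (rule real_le_lsqrt) auto
      moreover have "sqrt 2 > 0" by simp
      ultimately show ?thesis using d by (intro divide_left_mono) auto
    qed
    have "dist (z, y) (t1, x1) = sqrt ((dist z t1)\<^sup>2 + (dist y x1)\<^sup>2)" by (rule dist_Pair_Pair)
    also have "\<dots> < d"
    proof (rule real_sqrt_sum_squares_less)
      have "\<bar>dist z t1\<bar> = \<bar>z - t1\<bar>" by (simp add: dist_real_def)
      then show "\<bar>dist z t1\<bar> < d / sqrt 2" using that(3) s2 by linarith
      show "\<bar>dist y x1\<bar> < d / sqrt 2" proof -
        have "\<bar>dist y x1\<bar> = dist y x1" by simp
        then show ?thesis using that(4) s2 by linarith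
      qed
    qed
    finally have "dist (\<phi>t z y) (\<phi>t t1 x1) < \<eta> / 2" using dc[of "(z, y)"] that by simp
    then have "\<bar>\<phi>t z y - \<phi>t t1 x1\<bar> < \<eta> / 2" by (simp only: dist_real_def)
    then show ?thesis by linarith
  qed
  define h where "h = min (d / 2) t1 / 2"
  have h: "0 < h" "h < t1" "h < d / 2" using d t1 by (auto simp: h_def)
  define s where "s = t1 - h"
  have s: "0 < s" "s < t1" using h by (auto simp: s_def)
  have ineq: "\<phi> t1 y - \<phi> s y \<le> h * (\<phi>t t1 x1 + \<eta> / 2)" if y: "y \<in> \<Omega> \<inter> ball x1 (d / 2)" for y
  proof -
    have yc: "y \<in> closure \<Omega>" using y closure_subset by auto
    have cont: "continuous_on {s..t1} (\<lambda>\<sigma>. \<phi> \<sigma> y)"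
    proof -
      have "continuous_on {s..t1} (\<lambda>\<sigma>. (\<lambda>(t,x). \<phi> t x) (\<sigma>, y))"
        by (rule continuous_on_compose2[OF c\<phi>]) (use s t1 yc in \<open>auto intro!: continuous_intros\<close>)
      then show ?thesis by simp
    qed
    have der: "((\<lambda>\<sigma>. \<phi> \<sigma> y) has_real_derivative \<phi>t \<sigma> y) (at \<sigma>)" if "s < \<sigma>" "\<sigma> < t1" for \<sigma>
      using d\<phi>[of \<sigma> y] that s t1 y by auto
    obtain l z where z: "s < z" "z < t1" "DERIV (\<lambda>\<sigma>. \<phi> \<sigma> y) z :> l" "\<phi> t1 y - \<phi> s y = (t1 - s) * l"
      using MVT[OF s(2) cont] der real_differentiable_def by blast
    have "l = \<phi>t z y" using DERIV_unique[OF z(3) der[OF z(1,2)]] .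
    moreover have "\<phi>t z y < \<phi>t t1 x1 + \<eta> / 2"
    proof (rule near)
      show "z \<in> {0..T}" using z s t1 by auto
      show "y \<in> closure \<Omega>" by (rule yc)
      show "\<bar>z - t1\<bar> < d / 2" using z h s_def by auto
      show "dist y x1 < d / 2" using y by (auto simp: dist_commute)
    qed
    ultimately show ?thesis using z(4) h s_def by (simp add: mult_left_mono)
  qed
  have lim: "\<phi> t1 x1 - \<phi> s x1 \<le> h * (\<phi>t t1 x1 + \<eta> / 2)"
  proof (rule continuous_le_on_closure[where S="\<Omega> \<inter> ball x1 (d / 2)" and f="\<lambda>y. \<phi> t1 y - \<phi> s y"])
    have cl: "closure (\<Omega> \<inter> ball x1 (d / 2)) \<subseteq> closure \<Omega>" by (simp add: closure_mono)
    have c1: "continuous_on (closure \<Omega>) (\<lambda>y. (\<lambda>(t,x). \<phi> t x) (t1, y))"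
      by (rule continuous_on_compose2[OF c\<phi>]) (use t1 in \<open>auto intro!: continuous_intros\<close>)
    have c2: "continuous_on (closure \<Omega>) (\<lambda>y. (\<lambda>(t,x). \<phi> t x) (s, y))"
      by (rule continuous_on_compose2[OF c\<phi>]) (use s t1 in \<open>auto intro!: continuous_intros\<close>)
    show "continuous_on (closure (\<Omega> \<inter> ball x1 (d / 2))) (\<lambda>y. \<phi> t1 y - \<phi> s y)"
      using continuous_on_subset[OF continuous_on_diff[OF c1 c2] cl] by simp
    have "ball x1 (d / 2) \<inter> closure \<Omega> \<subseteq> closure (ball x1 (d / 2) \<inter> \<Omega>)"
      by (rule open_Int_closure_subset) simp
    then show "x1 \<in> closure (\<Omega> \<inter> ball x1 (d / 2))" using x1 d by (auto simp: Int_commute)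
  qed (rule ineq)
  have "\<phi> s x1 - \<epsilon> * (1 + s) \<le> \<phi> t1 x1 - \<epsilon> * (1 + t1)" using mx s by simp
  then have "\<epsilon> * h \<le> \<phi> t1 x1 - \<phi> s x1" by (simp add: s_def algebra_simps)
  with lim have "\<epsilon> * h \<le> h * (\<phi>t t1 x1 + \<eta> / 2)" by linarith
  moreover have "h * (\<phi>t t1 x1 + \<eta> / 2) = h * \<epsilon> - h * (\<eta> / 2)" by (simp add: \<eta>_def algebra_simps)
  moreover have "h * (\<eta> / 2) > 0" using h \<eta> by simp
  ultimately show False by (simp add: mult.commute)
qed

theorem lemma3p2:
  fixes \<Omega> :: "(real^'n) set" and nrm :: "real^'n \<Rightarrow> real^'n"
    and T r0 K A0 :: real
    and A \<tau> :: "real \<Rightarrow> real"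
    and \<beta> :: "real \<Rightarrow> real^'n \<Rightarrow> real^'n^'n \<Rightarrow> real"
    and \<kappa> :: "real \<Rightarrow> real \<Rightarrow> real"
    and v :: "real \<Rightarrow> real^'n \<Rightarrow> real^'n"
    and \<psi>0 :: "real^'n \<Rightarrow> real \<Rightarrow> real" and \<phi>0 :: "real^'n \<Rightarrow> real"
    and \<psi> :: "real \<Rightarrow> real^'n \<Rightarrow> real \<Rightarrow> real" and \<phi> :: "real \<Rightarrow> real^'n \<Rightarrow> real"
  assumes dim: "CARD('n) = 2 \<or> CARD('n) = 3"
    and T_pos: "T > 0" and r0_pos: "r0 > 0" and K_pos: "K > 0" and A0_pos: "A0 > 0"
    and dom: "bounded_C11_domain \<Omega> nrm"
    \<comment> \<open>(A1)\<close>
    and A1: "continuous_on {r0<..} A" "\<forall>r>r0. A r > 0" "antimono_on {r0<..} A"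
            "(A \<longlongrightarrow> 0) at_top"
    \<comment> \<open>(A2)\<close>
    and A2_mono: "mono_on {r0..} \<tau>" and A2_nonneg: "\<forall>r\<ge>r0. \<tau> r \<ge> 0"
    and A2_bdd: "\<exists>B. \<forall>r\<ge>r0. \<bar>\<tau> r\<bar> \<le> B"
    and A2_lip: "\<exists>L. \<forall>a\<ge>r0. \<forall>b\<ge>r0. \<bar>\<tau> a - \<tau> b\<bar> \<le> L * \<bar>a - b\<bar>"
    and A2_r0: "\<tau> r0 = 0"
    and A2_d0: "\<exists>d. (\<tau> has_real_derivative d) (at_right r0) \<and> d > 0 \<and>
                  r0 / K \<le> \<tau> r0 + r0 * d \<and> \<tau> r0 + d + r0 * d + \<tau> r0 / r0 \<le> K"
    and A2_ineq: "AE r in lborel. r > r0 \<longrightarrow>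
                  \<tau> differentiable (at r) \<and>
                  r0 / K \<le> \<tau> r + r * deriv \<tau> r \<and>
                  \<tau> r + deriv \<tau> r + r * deriv \<tau> r + \<tau> r / r \<le> K"
    \<comment> \<open>(A3)\<close>
    and A3_smooth: "smooth_on ({r0<..} \<times> UNIV) (\<lambda>(r, u, D). \<beta> r u D)"
    and A3_incr: "\<forall>u D. mono_on {r0<..} (\<lambda>r. \<beta> r u D)"
    and A3_bounds: "\<forall>r>r0. \<forall>u D. 0 < \<beta> r u D \<and> \<beta> r u D \<le> K"
    and A3_eta_bdd: "\<forall>r>r0. bdd_above {deriv (\<lambda>s. \<beta> s u D) r / \<beta> r u D | u D. True}"
    and A3_eta_meas: "eta \<beta> \<in> borel_measurable (restrict_space lborel {r0<..})"
    and A3_eta_nonneg: "\<forall>r>r0. eta \<beta> r \<ge> 0"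
    and A3_eta_decay: "\<forall>r>r0. (1 + r) * eta \<beta> r \<le> K"
    and A3_eta_int: "(\<integral>\<^sup>+ r\<in>{r0<..}. ennreal (eta \<beta> r) \<partial>lborel) \<le> ennreal K"
    \<comment> \<open>(A4)\<close>
    and A4: "\<forall>r rt. \<kappa> r rt = (if rt > r0 \<and> 0 < r \<and> r < rt then 1 / rt else 0)"
    \<comment> \<open>velocity field\<close>
    and v_C1: "C1_closed_cyl T \<Omega> v"
    and v_div: "\<forall>t\<in>{0<..<T}. \<forall>x\<in>\<Omega>. div_x v t x = 0"
    and v_bdry: "\<forall>t\<in>{0<..<T}. \<forall>x\<in>frontier \<Omega>. v t x \<bullet> nrm x = 0"
    \<comment> \<open>nonnegative classical solution\<close>
    and sol: "classical_solution \<Omega> nrm T r0 A0 A \<tau> \<beta> \<kappa> v \<psi>0 \<phi>0 \<psi> \<phi>"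
    and \<psi>_nonneg: "\<forall>t\<in>{0..T}. \<forall>x\<in>closure \<Omega>. \<forall>r\<in>{r0..}. \<psi> t x r \<ge> 0"
    and \<phi>_nonneg: "\<forall>t\<in>{0..T}. \<forall>x\<in>closure \<Omega>. \<phi> t x \<ge> 0"
    and \<phi>0_Linf: "in_Linf \<Omega> \<phi>0"
  shows "esssup (restrict_space lborel {0<..<T}) (\<lambda>t. Linf_norm \<Omega> (\<phi> t))
           \<le> max (ereal (K\<^sup>2)) (Linf_norm \<Omega> \<phi>0)"
proof -
  obtain \<psi>t \<psi>r :: "real \<Rightarrow> real^'n \<Rightarrow> real \<Rightarrow> real"
    and \<psi>x :: "real \<Rightarrow> real^'n \<Rightarrow> real \<Rightarrow> real^'n"
    and \<psi>xx :: "real \<Rightarrow> real^'n \<Rightarrow> real \<Rightarrow> real^'n^'n"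
    and \<phi>t :: "real \<Rightarrow> real^'n \<Rightarrow> real" and \<phi>x :: "real \<Rightarrow> real^'n \<Rightarrow> real^'n"
    and \<phi>xx :: "real \<Rightarrow> real^'n \<Rightarrow> real^'n^'n" where
    d\<phi>: "\<forall>t\<in>{0<..<T}. \<forall>x\<in>\<Omega>.
        ((\<lambda>s. \<phi> s x) has_real_derivative \<phi>t t x) (at t) \<and>
        ((\<lambda>y. \<phi> t y) has_derivative (\<lambda>h. \<phi>x t x \<bullet> h)) (at x) \<and>
        ((\<lambda>y. \<phi>x t y) has_derivative (\<lambda>h. \<phi>xx t x *v h)) (at x)"
    and dec: "\<forall>m::real. m \<ge> 0 \<longrightarrow> (\<exists>C. \<forall>t\<in>{0..T}. \<forall>x\<in>closure \<Omega>. \<forall>r\<in>{r0..}.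
        (1 + r) powr m * (\<bar>\<psi> t x r\<bar> + \<bar>\<psi>t t x r\<bar> + \<bar>\<psi>r t x r\<bar> + norm (\<psi>x t x r)
                          + norm (\<psi>xx t x r)) \<le> C)"
    and c\<psi>: "continuous_on ({0..T} \<times> closure \<Omega> \<times> {r0..}) (\<lambda>(t,x,r). \<psi> t x r)"
    and c\<phi>: "continuous_on ({0..T} \<times> closure \<Omega>) (\<lambda>(t,x). \<phi> t x)"
    and c\<phi>t: "continuous_on ({0..T} \<times> closure \<Omega>) (\<lambda>(t,x). \<phi>t t x)"
    and c\<phi>x: "continuous_on ({0..T} \<times> closure \<Omega>) (\<lambda>(t,x). \<phi>x t x)"
    and c\<phi>xx: "continuous_on ({0..T} \<times> closure \<Omega>) (\<lambda>(t,x). \<phi>xx t x)"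
    and bc: "\<forall>t\<in>{0..T}. \<forall>x\<in>frontier \<Omega>. \<phi>x t x \<bullet> nrm x = 0"
    and init: "\<forall>x\<in>closure \<Omega>. \<phi> 0 x = \<phi>0 x"
    and meq: "\<forall>t\<in>{0<..<T}. \<forall>x\<in>\<Omega>.
        \<phi>t t x + v t x \<bullet> \<phi>x t x - A0 * (\<Sum>i\<in>UNIV. \<phi>xx t x $ i $ i)
        = - \<phi> t x * (LINT r:{r0..}|lborel. (\<tau> r + r * deriv \<tau> r) * \<psi> t x r)
          + 2 * (LINT r:{0..r0}|lborel. r *
                   (LINT rt:{r0..}|lborel. \<beta> rt (v t x) (symgrad v t x) * \<kappa> r rt * \<psi> t x rt))"
    using sol[unfolded classical_solution_def] by (elim exE conjE) (rule that; assumption)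
  from v_C1 have cv: "continuous_on ({0..T} \<times> closure \<Omega>) (\<lambda>(t,x). v t x)"
    unfolding C1_closed_cyl_def by blast
  have op: "open \<Omega>" and \<Omega>ne: "\<Omega> \<noteq> {}" and bdd: "bounded \<Omega>"
    using dom by (auto simp: bounded_C11_domain_def)
  define E where "E t x = \<phi>t t x + v t x \<bullet> \<phi>x t x - A0 * (\<Sum>i\<in>UNIV. \<phi>xx t x $ i $ i)" for t x
  have step1: "E t x \<le> 0" if t: "t \<in> {0<..<T}" and x: "x \<in> \<Omega>" and ph: "\<phi> t x \<ge> K\<^sup>2" for t x
  proof -
    have xc: "x \<in> closure \<Omega>" using x closure_subset by auto
    have pc: "continuous_on {r0..} (\<psi> t x)"
    proof -
      have "continuous_on {r0..} (\<lambda>r. (\<lambda>(t,x,r). \<psi> t x r) (t, x, r))"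
        by (rule continuous_on_compose2[OF c\<psi>]) (use t xc in \<open>auto intro!: continuous_intros\<close>)
      then show ?thesis by simp
    qed
    obtain C where C: "\<And>r. r \<ge> r0 \<Longrightarrow> (1 + r) powr 2 * (\<bar>\<psi> t x r\<bar> + \<bar>\<psi>t t x r\<bar> + \<bar>\<psi>r t x r\<bar> + norm (\<psi>x t x r)
                          + norm (\<psi>xx t x r)) \<le> C"
      using dec[rule_format, of 2] t xc by force
    have pd: "(1 + r) powr 2 * \<bar>\<psi> t x r\<bar> \<le> C" if "r \<ge> r0" for r
    proof -
      have "(1 + r) powr 2 * \<bar>\<psi> t x r\<bar> \<le> (1 + r) powr 2 * (\<bar>\<psi> t x r\<bar> + \<bar>\<psi>t t x r\<bar> + \<bar>\<psi>r t x r\<bar> + norm (\<psi>x t x r)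
                          + norm (\<psi>xx t x r))" by (intro mult_left_mono) auto
      then show ?thesis using C[OF that] by linarith
    qed
    have pnn: "\<psi> t x r \<ge> 0" if "r \<ge> r0" for r using \<psi>_nonneg t xc that by auto
    have bb: "0 < \<beta> rt (v t x) (symgrad v t x) \<and> \<beta> rt (v t x) (symgrad v t x) \<le> K" if "rt > r0" for rt
      using A3_bounds that by blast
    have "E t x = - \<phi> t x * (LINT r:{r0..}|lborel. (\<tau> r + r * deriv \<tau> r) * \<psi> t x r)
          + 2 * (LINT r:{0..r0}|lborel. r *
                   (LINT rt:{r0..}|lborel. \<beta> rt (v t x) (symgrad v t x) * \<kappa> r rt * \<psi> t x rt))"
      unfolding E_def using meq t x by blast
    also have "\<dots> \<le> 0"
      by (rule source_ineq[OF r0_pos K_pos pc pnn pd A2_mono A2_nonneg A2_lip A2_ineq bb A4 ph])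
    finally show ?thesis .
  qed
  have cslice: "continuous_on (closure \<Omega>) (\<lambda>y. g t y)"
    if "t \<in> {0..T}" and cg: "continuous_on ({0..T} \<times> closure \<Omega>) (\<lambda>(t,x). g t x)"
    for t and g :: "real \<Rightarrow> real^'n \<Rightarrow> 'z::topological_space"
  proof -
    have "continuous_on (closure \<Omega>) (\<lambda>y. (\<lambda>(t,x). g t x) (t, y))"
      by (rule continuous_on_compose2[OF cg]) (use that in \<open>auto intro!: continuous_intros\<close>)
    then show ?thesis by simp
  qed
  have step2: "E t x \<le> 0" if t: "t \<in> {0<..<T}" and x: "x \<in> closure \<Omega>" and ph: "\<phi> t x > K\<^sup>2" for t x
  proof -
    have t': "t \<in> {0..T}" using t by auto
    have cE: "continuous_on (closure \<Omega>) (E t)" unfolding E_def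
      using cslice[OF t' c\<phi>t] cslice[OF t' cv] cslice[OF t' c\<phi>x] cslice[OF t' c\<phi>xx]
      by (intro continuous_intros) auto
    have cp: "continuous_on (closure \<Omega>) (\<phi> t)" using cslice[OF t' c\<phi>] by simp
    obtain \<delta> where \<delta>: "\<delta> > 0" "\<And>y. y \<in> closure \<Omega> \<Longrightarrow> dist y x < \<delta> \<Longrightarrow> dist (\<phi> t y) (\<phi> t x) < \<phi> t x - K\<^sup>2"
      using cp x ph unfolding continuous_on_iff by (metis diff_gt_0_iff_gt)
    show ?thesis
    proof (rule continuous_le_on_closure[where S="\<Omega> \<inter> ball x \<delta>" and f="E t"])
      show "continuous_on (closure (\<Omega> \<inter> ball x \<delta>)) (E t)"
        using continuous_on_subset[OF cE] by (simp add: closure_mono)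
      have "ball x \<delta> \<inter> closure \<Omega> \<subseteq> closure (ball x \<delta> \<inter> \<Omega>)"
        by (rule open_Int_closure_subset) simp
      then show "x \<in> closure (\<Omega> \<inter> ball x \<delta>)" using x \<delta> by (auto simp: Int_commute)
      fix y assume y: "y \<in> \<Omega> \<inter> ball x \<delta>"
      then have yc: "y \<in> closure \<Omega>" using closure_subset by auto
      have "dist (\<phi> t y) (\<phi> t x) < \<phi> t x - K\<^sup>2" using \<delta>(2)[OF yc] y by (auto simp: dist_commute)
      then have "\<phi> t y \<ge> K\<^sup>2" by (simp add: dist_real_def abs_less_iff)
      then show "E t y \<le> 0" using step1 t y by auto
    qed
  qed
  have c\<phi>0: "continuous_on (closure \<Omega>) \<phi>0"
  proof -
    have "continuous_on (closure \<Omega>) (\<lambda>y. \<phi> 0 y)" using cslice[OF _ c\<phi>] T_pos by simp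
    then show ?thesis by (rule continuous_on_eq) (use init in auto)
  qed
  have c\<phi>0': "continuous_on \<Omega> \<phi>0" using continuous_on_subset[OF c\<phi>0 closure_subset] .
  define L0 where "L0 = Linf_norm \<Omega> \<phi>0"
  have L0fin: "L0 < \<infinity>" using \<phi>0_Linf by (simp add: in_Linf_def L0_def)
  have ptL0: "ereal \<bar>\<phi>0 x\<bar> \<le> L0" if "x \<in> \<Omega>" for x
    unfolding L0_def Linf_norm_def by (rule pt_le_esssup[OF op c\<phi>0' that])
  obtain x0 where x0: "x0 \<in> \<Omega>" using \<Omega>ne by blast
  have "L0 \<noteq> - \<infinity>" using ptL0[OF x0] by auto
  then obtain m0 where m0: "L0 = ereal m0" using L0fin by (cases L0) auto
  have phi0_le: "\<phi> 0 x \<le> m0" if "x \<in> closure \<Omega>" for x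
  proof -
    have "\<phi>0 x \<le> m0"
    proof (rule continuous_le_on_closure[OF c\<phi>0 that])
      fix y assume "y \<in> \<Omega>"
      then have "\<bar>\<phi>0 y\<bar> \<le> m0" using ptL0 m0 by force
      then show "\<phi>0 y \<le> m0" by simp
    qed
    then show ?thesis using init that by simp
  qed
  define M where "M = max (K\<^sup>2) m0"
  \<comment> \<open>Step 4: maximum principle\<close>
  have mp: "\<phi> t x \<le> M + \<epsilon> * (1 + t)"
    if T': "0 < T'" "T' < T" and \<epsilon>: "\<epsilon> > 0" and t: "t \<in> {0..T'}" and x: "x \<in> closure \<Omega>" for T' \<epsilon> t x
  proof (rule ccontr)
    assume neg: "\<not> \<phi> t x \<le> M + \<epsilon> * (1 + t)"
    define S where "S = {0..T'} \<times> closure \<Omega>"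
    define w where "w = (\<lambda>p. (\<lambda>(t,x). \<phi> t x) p - \<epsilon> * (1 + fst p))"
    have SS: "S \<subseteq> {0..T} \<times> closure \<Omega>" using T' by (auto simp: S_def)
    have cw: "continuous_on S w" unfolding w_def
      by (intro continuous_intros continuous_on_subset[OF c\<phi> SS])
    have kS: "compact S" unfolding S_def
      by (intro compact_Times compact_Icc) (simp add: compact_closure bdd)
    have neS: "S \<noteq> {}" using x t by (auto simp: S_def)
    obtain p1 where p1: "p1 \<in> S" "\<And>p. p \<in> S \<Longrightarrow> w p \<le> w p1"
      using continuous_attains_sup[OF kS neS cw] by blast
    obtain t1 x1 where p1eq: "p1 = (t1, x1)" by (cases p1)
    have t1: "t1 \<in> {0..T'}" and x1: "x1 \<in> closure \<Omega>" using p1(1) by (auto simp: S_def p1eq)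
    have mxw: "\<phi> s y - \<epsilon> * (1 + s) \<le> \<phi> t1 x1 - \<epsilon> * (1 + t1)" if "s \<in> {0..T'}" "y \<in> closure \<Omega>" for s y
      using p1(2)[of "(s, y)"] that by (simp add: S_def w_def p1eq)
    have big: "\<phi> t1 x1 - \<epsilon> * (1 + t1) > M" using mxw[OF t x] neg by simp
    have t1pos: "t1 > 0"
    proof (rule ccontr)
      assume "\<not> t1 > 0"
      then have "t1 = 0" using t1 by simp
      then have "\<phi> 0 x1 - \<epsilon> > M" using big by simp
      moreover have "\<phi> 0 x1 \<le> m0" by (rule phi0_le[OF x1])
      ultimately show False using \<epsilon> by (simp add: M_def)
    qed
    have t1T: "t1 \<in> {0<..<T}" using t1 t1pos T' by auto
    have "\<epsilon> * (1 + t1) > 0" using \<epsilon> t1 by simp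
    then have phbig: "\<phi> t1 x1 > K\<^sup>2" using big by (simp add: M_def)
    have Eneg: "E t1 x1 \<le> 0" by (rule step2[OF t1T x1 phbig])
    have tg: "\<phi>t t1 x1 \<ge> \<epsilon>"
    proof (rule time_deriv_ge[OF c\<phi> c\<phi>t _ t1pos _ x1 \<epsilon>])
      show "\<And>t x. t \<in> {0<..<T} \<Longrightarrow> x \<in> \<Omega> \<Longrightarrow> ((\<lambda>s. \<phi> s x) has_real_derivative \<phi>t t x) (at t)"
        using d\<phi> by blast
      show "t1 < T" using t1T by simp
      fix s assume "0 \<le> s" "s \<le> t1"
      then show "\<phi> s x1 - \<epsilon> * (1 + s) \<le> \<phi> t1 x1 - \<epsilon> * (1 + t1)" using mxw[OF _ x1] t1 by simp
    qed
    have t1': "t1 \<in> {0..T}" using t1T by simp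
    have sp: "\<phi>x t1 x1 = 0 \<and> (\<forall>i. \<phi>xx t1 x1 $ i $ i \<le> 0)"
    proof (rule max_point_cond[OF op])
      show "continuous_on (closure \<Omega>) (\<phi> t1)" using cslice[OF t1' c\<phi>] by simp
      show "continuous_on (closure \<Omega>) (\<phi>x t1)" using cslice[OF t1' c\<phi>x] by simp
      show "continuous_on (closure \<Omega>) (\<phi>xx t1)" using cslice[OF t1' c\<phi>xx] by simp
      show "\<And>y. y \<in> \<Omega> \<Longrightarrow> (\<phi> t1 has_derivative (\<lambda>h. \<phi>x t1 y \<bullet> h)) (at y)"
        using d\<phi> t1T by auto
      show "\<And>y. y \<in> \<Omega> \<Longrightarrow> (\<phi>x t1 has_derivative (\<lambda>h. \<phi>xx t1 y *v h)) (at y)"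
        using d\<phi> t1T by auto
      show "x1 \<in> closure \<Omega>" by (rule x1)
      show "\<And>y. y \<in> closure \<Omega> \<Longrightarrow> \<phi> t1 y \<le> \<phi> t1 x1" using mxw[OF t1] by simp
      assume nx: "x1 \<notin> \<Omega>"
      have fr: "x1 \<in> frontier \<Omega>" using x1 nx op by (simp add: frontier_def interior_open)
      show "norm (nrm x1) = 1 \<and> \<phi>x t1 x1 \<bullet> nrm x1 = 0 \<and>
            (\<forall>e. e \<bullet> nrm x1 < 0 \<longrightarrow> (\<exists>\<delta>>0. \<forall>s. 0 < s \<longrightarrow> s < \<delta> \<longrightarrow> x1 + s *\<^sub>R e \<in> \<Omega>))"
        using boundary_adm[OF dom x1 nx] bc t1' fr by blast
    qed
    have "(\<Sum>i\<in>UNIV. \<phi>xx t1 x1 $ i $ i) \<le> 0" using sp by (intro sum_nonpos) auto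
    then have "A0 * (\<Sum>i\<in>UNIV. \<phi>xx t1 x1 $ i $ i) \<le> 0" using A0_pos by (simp add: mult_nonneg_nonpos)
    then have "E t1 x1 \<ge> \<epsilon>" using tg sp by (simp add: E_def)
    then show False using Eneg \<epsilon> by simp
  qed
  have bound: "\<phi> t x \<le> M" if t: "t \<in> {0<..<T}" and x: "x \<in> closure \<Omega>" for t x
  proof (rule field_le_epsilon)
    fix e :: real assume e: "0 < e"
    have tp: "1 + t > 0" using t by simp
    have "\<phi> t x \<le> M + (e / (1 + t)) * (1 + t)"
      by (rule mp[of t]) (use t x e tp in auto)
    then show "\<phi> t x \<le> M + e" using tp by simp
  qed
  have Linf_le: "Linf_norm \<Omega> (\<phi> t) \<le> ereal M" if t: "t \<in> {0<..<T}" for t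
  proof -
    have t': "t \<in> {0..T}" using t by simp
    have "continuous_on \<Omega> (\<phi> t)"
      using continuous_on_subset[OF cslice[OF t' c\<phi>] closure_subset] by simp
    then show ?thesis unfolding Linf_norm_def
    proof (rule esssup_le_pointwise[OF _ op])
      fix x assume x: "x \<in> \<Omega>"
      then have xc: "x \<in> closure \<Omega>" using closure_subset by auto
      have "\<phi> t x \<ge> 0" using \<phi>_nonneg t' xc by auto
      then show "ereal \<bar>\<phi> t x\<bar> \<le> ereal M" using bound[OF t xc] by simp
    qed
  qed
  have "esssup (restrict_space lborel {0<..<T}) (\<lambda>t. Linf_norm \<Omega> (\<phi> t)) \<le> ereal M"
  proof (rule esssup_I[OF Linf_meas[OF op c\<phi>]])
    show "AE t in restrict_space lborel {0<..<T}. Linf_norm \<Omega> (\<phi> t) \<le> ereal M"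
      by (rule AE_I2) (auto simp: space_restrict_space intro: Linf_le)
  qed
  also have "ereal M = max (ereal (K\<^sup>2)) (Linf_norm \<Omega> \<phi>0)"
    using m0 unfolding M_def L0_def by simp
  finally show ?thesis .
qed

end
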